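(* $\mathrm{P}^*_{\mathrm{lsis}}=\mathrm{NP/poly}$, where each Boolean function family $(f_n)_{n\in\mathbb N}$ is identified with the language $\{w\in\mathbb B^*: f_{|w|}(w)=T\}$.
   Context: $\mathbb B=\{T,F\}$. $\mathrm{NP/poly}$ is the usual class of languages decided by nondeterministic polynomial-time Turing machines taking polynomial-length advice (equivalently, languages $L$ for which there are $k$ and $g\in\mathrm{P/poly}$ with $w\in L$ iff $\exists c\in\mathbb B^*$, $|c|\le|w|^k$, $g(w,c)=T$). A primitive instruction is one of: a plain basic instruction $a$, a positive test instruction $+a$, a negative test instruction $-a$, a forward jump instruction $\#l$ ($l\in\mathbb N$), or the termination instruction $!$. An instruction sequence is a finite nonempty sequence $X=u_1;\dots;u_k$ of primitive instructions; $|X|=k$. $\mathrm{SIS}_{br}$ is the set of instruction sequences all of whose basic instructions belong to $\{\mathrm{in}{:}i.\mathrm{get}: i\ge1\}\cup\{\mathrm{out}.\mathrm{set}{:}T\}\cup\{\mathrm{split}(\mathrm{par}{:}i),\mathrm{reply}(\mathrm{par}{:}i): i\ge1\}$, where $\mathrm{in}{:}i$, $\mathrm{out}$ name Boolean registers and $\mathrm{par}{:}i$ are Boolean parameters. Splitting execution of $X\in\mathrm{SIS}_{br}$ on input $b\in\mathbb B^n$ is a finite tree of branches; each branch has a counter (initially 1) and a partial assignment $\sigma$ of Boolean parameters (initially empty). A branch deadlocks if its counter exceeds $k$, if it reaches $\#0$, if it executes $\mathrm{in}{:}j.\mathrm{get}$ with $j>n$, if it executes $\mathrm{reply}(p)$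 with $\sigma(p)$ undefined, or if it executes $\mathrm{split}(p)$ with $\sigma(p)$ defined. At position $i$: $!$ terminates the branch successfully; $\#l$ ($l>0$) moves the counter to $i+l$; for $u_i\in\{a,+a,-a\}$ the basic instruction $a$ yields reply $r$ ($\mathrm{in}{:}j.\mathrm{get}$ yields $b_j$; $\mathrm{out}.\mathrm{set}{:}T$ yields $T$; $\mathrm{reply}(p)$ yields $\sigma(p)$; $\mathrm{split}(p)$ with $\sigma(p)$ undefined replaces the branch by two branches, one with $r=T$ and assignment $\sigma\cup\{p\mapsto T\}$ and one with $r=F$ and assignment $\sigma\cup\{p\mapsto F\}$), and the counter becomes $i+1$ for $a$; for $+a$: $i+1$ if $r=T$, $i+2$ if $r=F$; for $-a$: $i+1$ if $r=F$, $i+2$ if $r=T$. $X$ splitting computes $f:\mathbb B^n\to\mathbb B$ if for every $b\in\mathbb B^n$, every branch terminates successfully, and $f(b)=T$ iff some branch executes $\mathrm{out}.\mathrm{set}{:}T$. $\mathrm{P}^*_{\mathrm{lsis}}$ is the class of Boolean function families $(f_n)_{n\in\mathbb N}$, $f_n:\mathbb B^n\to\mathbb B$, for which there is a polynomial $h$ such that for every $n$ some $X\in\mathrm{SIS}_{br}$ splitting computes $f_n$ with $|X|\le h(n)$. *)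

theory Defs
  imports Main
begin

datatype basic =
    InGet nat
  | OutSetT
  | Split nat
  | Reply nat

datatype prim =
    Plain basic
  | PosTest basic
  | NegTest basic
  | FJmp nat
  | Term

fun basic_of :: "prim \<Rightarrow> basic option" where
  "basic_of (Plain a) = Some a"
| "basic_of (PosTest a) = Some a"
| "basic_of (NegTest a) = Some a"
| "basic_of _ = None"

fun basic_ok :: "basic \<Rightarrow> bool" where
  "basic_ok (InGet i) = (i \<ge> 1)"
| "basic_ok OutSetT = True"
| "basic_ok (Split i) = (i \<ge> 1)"
| "basic_ok (Reply i) = (i \<ge> 1)"

definition SIS_br :: "prim list set" where
  "SIS_br = {X. X \<noteq> [] \<and> (\<forall>u\<in>set X. \<forall>a. basic_of u = Some a \<longrightarrow> basic_ok a)}"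

fun next_pc :: "prim \<Rightarrow> nat \<Rightarrow> bool \<Rightarrow> nat" where
  "next_pc (PosTest a) pc r = (if r then pc + 1 else pc + 2)"
| "next_pc (NegTest a) pc r = (if r then pc + 2 else pc + 1)"
| "next_pc _ pc r = pc + 1"

lemma next_pc_gt: "pc < next_pc u pc r"
  by (cases u) auto

text \<open>Reply of a non-splitting basic instruction (None = deadlock).
  Input registers in:1 .. in:n hold b_1 .. b_n (list positions 0 .. n-1).\<close>
fun basic_reply :: "bool list \<Rightarrow> (nat \<Rightarrow> bool option) \<Rightarrow> basic \<Rightarrow> bool option" where
  "basic_reply b \<sigma> (InGet j) = (if 1 \<le> j \<and> j \<le> length b then Some (b ! (j - 1)) else None)"
| "basic_reply b \<sigma> OutSetT = Some True"
| "basic_reply b \<sigma> (Reply p) = \<sigma> p"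
| "basic_reply b \<sigma> (Split p) = None"

text \<open>Outcome of a leaf branch: deadlock, or successful termination together with the
  information whether out.set:T was executed on the path from the root to this leaf.\<close>
datatype outcome = Deadlock | Ok bool

text \<open>All leaves of the splitting execution starting from counter pc, parameter
  assignment sigma and flag fl (out.set:T already executed).\<close>
function run :: "prim list \<Rightarrow> bool list \<Rightarrow> nat \<Rightarrow> (nat \<Rightarrow> bool option) \<Rightarrow> bool \<Rightarrow> outcome list" where
  "run X b pc \<sigma> fl =
    (if pc = 0 \<or> length X < pc then [Deadlock] else
     (let u = X ! (pc - 1) in
      case u of
        Term \<Rightarrow> [Ok fl]
      | FJmp l \<Rightarrow> (if l = 0 then [Deadlock] else run X b (pc + l) \<sigma> fl)
      | _ \<Rightarrow>
        (let a = the (basic_of u); fl' = (fl \<or> a = OutSetT) in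
         case a of
           Split p \<Rightarrow>
             (case \<sigma> p of
                Some _ \<Rightarrow> [Deadlock]
              | None \<Rightarrow> run X b (next_pc u pc True) (\<sigma>(p \<mapsto> True)) fl'
                        @ run X b (next_pc u pc False) (\<sigma>(p \<mapsto> False)) fl')
         | _ \<Rightarrow>
             (case basic_reply b \<sigma> a of
                None \<Rightarrow> [Deadlock]
              | Some r \<Rightarrow> run X b (next_pc u pc r) \<sigma> fl'))))"
  by pat_completeness auto
termination
  by (relation "measure (\<lambda>(X, b, pc, \<sigma>, fl). Suc (length X) - pc)")
     (auto simp: next_pc_gt diff_less_mono2 less_Suc_eq_le)

definition splitting_computes :: "prim list \<Rightarrow> nat \<Rightarrow> (bool list \<Rightarrow> bool) \<Rightarrow> bool" where
  "splitting_computes X n f \<longleftrightarrow>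
     (\<forall>b. length b = n \<longrightarrow>
        (let R = run X b 1 Map.empty False in
           Deadlock \<notin> set R \<and> (f b \<longleftrightarrow> Ok True \<in> set R)))"

definition poly_bounded :: "(nat \<Rightarrow> nat) \<Rightarrow> bool" where
  "poly_bounded h \<longleftrightarrow> (\<exists>c k. \<forall>n. h n \<le> c * n ^ k + c)"

text \<open>Boolean function families (f_n) with f_n : B^n -> B (only the values of f n on
  lists of length n matter).\<close>
definition P_lsis :: "(nat \<Rightarrow> bool list \<Rightarrow> bool) set" where
  "P_lsis = {f. \<exists>h. poly_bounded h \<and>
                 (\<forall>n. \<exists>X \<in> SIS_br. length X \<le> h n \<and> splitting_computes X n (f n))}"

definition lang_of :: "(nat \<Rightarrow> bool list \<Rightarrow> bool) \<Rightarrow> bool list set" where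
  "lang_of f = {w. f (length w) w}"

text \<open>Straight-line Boolean circuits: gate i may refer to inputs and to earlier gates
  (wires 0 .. i-1); dangling references read False. Output = last gate.\<close>
datatype gate = GIn nat | GConst bool | GNot nat | GAnd nat nat | GOr nat nat

definition wire :: "bool list \<Rightarrow> nat \<Rightarrow> bool" where
  "wire vs i = (i < length vs \<and> vs ! i)"

fun gate_val :: "bool list \<Rightarrow> bool list \<Rightarrow> gate \<Rightarrow> bool" where
  "gate_val x vs (GIn i) = wire x i"
| "gate_val x vs (GConst c) = c"
| "gate_val x vs (GNot i) = (\<not> wire vs i)"
| "gate_val x vs (GAnd i j) = (wire vs i \<and> wire vs j)"
| "gate_val x vs (GOr i j) = (wire vs i \<or> wire vs j)"

fun eval_gates :: "bool list \<Rightarrow> gate list \<Rightarrow> bool list \<Rightarrow> bool list" where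
  "eval_gates x [] vs = vs"
| "eval_gates x (g # gs) vs = eval_gates x gs (vs @ [gate_val x vs g])"

definition circ_eval :: "gate list \<Rightarrow> bool list \<Rightarrow> bool" where
  "circ_eval C x = (let vs = eval_gates x C [] in vs \<noteq> [] \<and> last vs)"

definition Ppoly2 :: "(bool list \<Rightarrow> bool list \<Rightarrow> bool) \<Rightarrow> bool" where
  "Ppoly2 g \<longleftrightarrow> (\<exists>h. poly_bounded h \<and>
      (\<forall>n m. \<exists>C. length C \<le> h (n + m) \<and>
         (\<forall>w c. length w = n \<longrightarrow> length c = m \<longrightarrow> circ_eval C (w @ c) = g w c)))"

definition NPpoly :: "bool list set set" where
  "NPpoly = {L. \<exists>k g. Ppoly2 g \<and>
      (\<forall>w. w \<in> L \<longleftrightarrow> (\<exists>c. length c \<le> length w ^ k \<and> g w c))}"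

end

theory Submission
  imports Defs "HOL-Library.Nat_Bijection"
begin


declare run.simps[simp del]

lemma next_pc_add: "next_pc u (a + pc) r = a + next_pc u pc r"
  by (cases u) auto

lemma run_oob: "pc = 0 \<or> length X < pc \<Longrightarrow> run X b pc \<sigma> fl = [Deadlock]"
  by (subst run.simps) simp

lemma run_shift: "pc \<ge> 1 \<Longrightarrow> run (A @ Y) b (length A + pc) \<sigma> fl = run Y b pc \<sigma> fl"
proof (induction Y b pc \<sigma> fl rule: run.induct)
  case (1 Y b pc \<sigma> fl)
  show ?case
  proof (cases "length Y < pc")
    case True
    then show ?thesis by (simp add: run_oob)
  next
    case False
    have nth: "(A @ Y) ! (length A + pc - Suc 0) = Y ! (pc - Suc 0)"
      proof -
      have "length A + pc - Suc 0 = length A + (pc - Suc 0)" using "1.prems" by simp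
      then show ?thesis by (simp only: nth_append_length_plus)
    qed
    show ?thesis
    proof (cases "Y ! (pc - 1)")
      case (FJmp l)
      then show ?thesis using False "1.prems" "1.IH"
        by (subst (1 2) run.simps) (simp add: nth add.assoc)
    next
      case Term
      then show ?thesis using False "1.prems"
        by (subst (1 2) run.simps) (simp add: nth add.assoc)
    next
      case (Plain a)
      then show ?thesis using False "1.prems" "1.IH"
        apply (subst (1 2) run.simps)
        apply (cases a)
        apply (simp_all add: nth Let_def next_pc_add fun_upd_def split: option.split)
        done
    next
      case (PosTest a)
      then show ?thesis using False "1.prems" "1.IH"
        apply (subst (1 2) run.simps)
        apply (cases a)
        apply (simp_all add: nth Let_def next_pc_add fun_upd_def split: option.split)
        done
    next
      case (NegTest a)
      then show ?thesis using False "1.prems" "1.IH"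
        apply (subst (1 2) run.simps)
        apply (cases a)
        apply (simp_all add: nth Let_def next_pc_add fun_upd_def split: option.split)
        done
    qed
  qed
qed


datatype atom = AIn nat | APar nat
datatype lit = LC bool | LA bool atom
datatype op = OSplit nat | OCl "lit list" | OOut lit

fun atb :: "atom \<Rightarrow> basic" where
  "atb (AIn j) = InGet j" | "atb (APar p) = Reply p"

fun lcode :: "lit \<Rightarrow> prim" where
  "lcode (LC True) = FJmp 1"
| "lcode (LC False) = FJmp 2"
| "lcode (LA True a) = PosTest (atb a)"
| "lcode (LA False a) = NegTest (atb a)"

fun clcode :: "lit list \<Rightarrow> prim list" where
  "clcode [] = [Term]"
| "clcode (l # ls) = [lcode l, FJmp (2 * length ls + 2)] @ clcode ls"

fun opcode :: "op \<Rightarrow> prim list" where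
  "opcode (OSplit p) = [Plain (Split p)]"
| "opcode (OCl ls) = clcode ls"
| "opcode (OOut l) = [lcode l, Plain OutSetT]"

definition prog :: "op list \<Rightarrow> prim list" where
  "prog ops = concat (map opcode ops) @ [Term]"

fun atv :: "bool list \<Rightarrow> (nat \<Rightarrow> bool option) \<Rightarrow> atom \<Rightarrow> bool option" where
  "atv b \<sigma> (AIn j) = basic_reply b \<sigma> (InGet j)"
| "atv b \<sigma> (APar p) = \<sigma> p"

fun litv :: "bool list \<Rightarrow> (nat \<Rightarrow> bool option) \<Rightarrow> lit \<Rightarrow> bool option" where
  "litv b \<sigma> (LC c) = Some c"
| "litv b \<sigma> (LA pol a) = map_option (\<lambda>v. v = pol) (atv b \<sigma> a)"

fun clv :: "bool list \<Rightarrow> (nat \<Rightarrow> bool option) \<Rightarrow> lit list \<Rightarrow> bool option" where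
  "clv b \<sigma> [] = Some False"
| "clv b \<sigma> (l # ls) = (case litv b \<sigma> l of None \<Rightarrow> None | Some True \<Rightarrow> Some True | Some False \<Rightarrow> clv b \<sigma> ls)"

fun exec :: "bool list \<Rightarrow> op list \<Rightarrow> (nat \<Rightarrow> bool option) \<Rightarrow> bool \<Rightarrow> outcome list" where
  "exec b [] \<sigma> fl = [Ok fl]"
| "exec b (OSplit p # ops) \<sigma> fl = (case \<sigma> p of Some _ \<Rightarrow> [Deadlock]
     | None \<Rightarrow> exec b ops (\<sigma>(p \<mapsto> True)) fl @ exec b ops (\<sigma>(p \<mapsto> False)) fl)"
| "exec b (OCl ls # ops) \<sigma> fl = (case clv b \<sigma> ls of None \<Rightarrow> [Deadlock]
     | Some True \<Rightarrow> exec b ops \<sigma> fl | Some False \<Rightarrow> [Ok fl])"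
| "exec b (OOut l # ops) \<sigma> fl = (case litv b \<sigma> l of None \<Rightarrow> [Deadlock]
     | Some v \<Rightarrow> exec b ops \<sigma> (fl \<or> v))"

lemma length_clcode: "length (clcode ls) = 2 * length ls + 1"
  by (induction ls) auto

lemma run_1: "pc \<ge> 1 \<Longrightarrow> run (u # Y) b (Suc pc) \<sigma> fl = run Y b pc \<sigma> fl"
  using run_shift[of pc "[u]" Y] by simp

lemma run_lit:
  "run (lcode l # Y) b (Suc 0) \<sigma> fl = (case litv b \<sigma> l of None \<Rightarrow> [Deadlock]
      | Some True \<Rightarrow> run Y b (Suc 0) \<sigma> fl | Some False \<Rightarrow> run Y b 2 \<sigma> fl)"
proof (cases l)
  case (LC c)
  then show ?thesis
    by (cases c) (subst run.simps, simp add: run_1 numeral_2_eq_2)+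
next
  case (LA pol a)
  then show ?thesis
    by (cases pol; cases a) (subst run.simps, simp add: run_1 numeral_2_eq_2 split: option.split)+
qed

lemma run_jmp: "d \<ge> 1 \<Longrightarrow> run (FJmp d # Z) b (Suc 0) \<sigma> fl = run Z b d \<sigma> fl"
  by (subst run.simps) (simp add: run_1)

lemma run_clcode:
  "run (clcode ls @ Y) b (Suc 0) \<sigma> fl = (case clv b \<sigma> ls of None \<Rightarrow> [Deadlock]
      | Some True \<Rightarrow> run Y b (Suc 0) \<sigma> fl | Some False \<Rightarrow> [Ok fl])"
proof (induction ls)
  case Nil
  then show ?case by (subst run.simps) simp
next
  case (Cons l ls)
  have sh: "run (clcode ls @ Y) b (2 * length ls + 2) \<sigma> fl = run Y b (Suc 0) \<sigma> fl"
    using run_shift[of 1 "clcode ls" Y b \<sigma> fl] by (simp add: length_clcode)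
  have j1: "run (FJmp (2 * length ls + 2) # clcode ls @ Y) b (Suc 0) \<sigma> fl = run Y b (Suc 0) \<sigma> fl"
    using run_jmp[of "2 * length ls + 2" "clcode ls @ Y"] sh by simp
  have j2: "run (FJmp (2 * length ls + 2) # clcode ls @ Y) b 2 \<sigma> fl = run (clcode ls @ Y) b (Suc 0) \<sigma> fl"
    using run_1[of 1] by (simp add: numeral_2_eq_2)
  have "run (clcode (l # ls) @ Y) b (Suc 0) \<sigma> fl
     = run (lcode l # (FJmp (2 * length ls + 2) # clcode ls @ Y)) b (Suc 0) \<sigma> fl" by simp
  also have "\<dots> = (case litv b \<sigma> l of None \<Rightarrow> [Deadlock]
      | Some True \<Rightarrow> run Y b (Suc 0) \<sigma> fl | Some False \<Rightarrow> run (clcode ls @ Y) b (Suc 0) \<sigma> fl)"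
    by (simp only: run_lit j1 j2)
  finally show ?case
    by (simp add: Cons.IH split: option.split bool.split)
qed

lemma run_opcode_split: "run (Plain (Split p) # Y) b (Suc 0) \<sigma> fl = (case \<sigma> p of Some _ \<Rightarrow> [Deadlock]
     | None \<Rightarrow> run Y b (Suc 0) (\<sigma>(p \<mapsto> True)) fl @ run Y b (Suc 0) (\<sigma>(p \<mapsto> False)) fl)"
  by (subst run.simps) (simp add: run_1 split: option.split)

lemma run_out: "run (Plain OutSetT # Y) b (Suc 0) \<sigma> fl = run Y b (Suc 0) \<sigma> True"
  by (subst run.simps) (simp add: run_1)

lemma run_out2: "run (Plain OutSetT # Y) b 2 \<sigma> fl = run Y b (Suc 0) \<sigma> fl"
  using run_1[of 1 "Plain OutSetT" Y b \<sigma> fl] by (simp add: numeral_2_eq_2)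

lemma run_opcode_out: "run (lcode l # Plain OutSetT # Y) b (Suc 0) \<sigma> fl = (case litv b \<sigma> l of None \<Rightarrow> [Deadlock]
     | Some v \<Rightarrow> run Y b (Suc 0) \<sigma> (fl \<or> v))"
  by (simp add: run_lit run_out run_out2 split: option.split bool.split)

lemma prog_Cons: "prog (op1 # ops) = opcode op1 @ prog ops" by (simp add: prog_def)

lemma run_prog: "run (prog ops) b (Suc 0) \<sigma> fl = exec b ops \<sigma> fl"
proof (induction ops arbitrary: \<sigma> fl)
  case Nil
  then show ?case by (subst run.simps) (simp add: prog_def)
next
  case (Cons op1 ops)
  have pe: "prog (op1 # ops) = opcode op1 @ prog ops" by (simp add: prog_def)
  show ?case
  proof (cases op1)
    case (OSplit p)
    show ?thesis unfolding OSplit prog_Cons by (simp add: fun_upd_def run_opcode_split Cons.IH split: option.split)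
  next
    case (OCl ls)
    show ?thesis unfolding OCl prog_Cons by (simp add: run_clcode Cons.IH split: option.split bool.split)
  next
    case (OOut l)
    show ?thesis unfolding OOut prog_Cons by (simp add: run_opcode_out Cons.IH split: option.split bool.split)
  qed
qed


fun wfat :: "nat \<Rightarrow> nat set \<Rightarrow> atom \<Rightarrow> bool" where
  "wfat n D (AIn j) = (1 \<le> j \<and> j \<le> n)"
| "wfat n D (APar p) = (p \<in> D)"

fun wflit :: "nat \<Rightarrow> nat set \<Rightarrow> lit \<Rightarrow> bool" where
  "wflit n D (LC c) = True"
| "wflit n D (LA pol a) = wfat n D a"

fun wfo :: "nat \<Rightarrow> nat set \<Rightarrow> op list \<Rightarrow> bool" where
  "wfo n D [] = True"
| "wfo n D (OSplit p # ops) = (p \<notin> D \<and> wfo n (insert p D) ops)"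
| "wfo n D (OCl ls # ops) = ((\<forall>l\<in>set ls. wflit n D l) \<and> wfo n D ops)"
| "wfo n D (OOut l # ops) = (wflit n D l \<and> wfo n D ops)"

fun tat :: "bool list \<Rightarrow> (nat \<Rightarrow> bool) \<Rightarrow> atom \<Rightarrow> bool" where
  "tat b \<tau> (AIn j) = b ! (j - 1)"
| "tat b \<tau> (APar p) = \<tau> p"

fun tlit :: "bool list \<Rightarrow> (nat \<Rightarrow> bool) \<Rightarrow> lit \<Rightarrow> bool" where
  "tlit b \<tau> (LC c) = c"
| "tlit b \<tau> (LA pol a) = (tat b \<tau> a = pol)"

definition tcl :: "bool list \<Rightarrow> (nat \<Rightarrow> bool) \<Rightarrow> lit list \<Rightarrow> bool" where
  "tcl b \<tau> ls = (\<exists>l\<in>set ls. tlit b \<tau> l)"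

fun acc :: "bool list \<Rightarrow> (nat \<Rightarrow> bool) \<Rightarrow> op list \<Rightarrow> bool \<Rightarrow> bool" where
  "acc b \<tau> [] fl = fl"
| "acc b \<tau> (OSplit p # ops) fl = acc b \<tau> ops fl"
| "acc b \<tau> (OCl ls # ops) fl = (if tcl b \<tau> ls then acc b \<tau> ops fl else fl)"
| "acc b \<tau> (OOut l # ops) fl = acc b \<tau> ops (fl \<or> tlit b \<tau> l)"

definition ext :: "(nat \<Rightarrow> bool option) \<Rightarrow> (nat \<Rightarrow> bool) \<Rightarrow> bool" where
  "ext \<sigma> \<tau> = (\<forall>p v. \<sigma> p = Some v \<longrightarrow> \<tau> p = v)"

definition tau0 :: "(nat \<Rightarrow> bool option) \<Rightarrow> nat \<Rightarrow> bool" where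
  "tau0 \<sigma> p = (case \<sigma> p of Some v \<Rightarrow> v | None \<Rightarrow> False)"

lemma ext_tau0: "ext \<sigma> (tau0 \<sigma>)"
  by (simp add: ext_def tau0_def)

lemma litv_tot: "wflit (length b) (dom \<sigma>) l \<Longrightarrow> ext \<sigma> \<tau> \<Longrightarrow> litv b \<sigma> l = Some (tlit b \<tau> l)"
  apply (cases l)
   apply simp
  subgoal for pol a by (cases a) (auto simp: ext_def)
  done

lemma clv_tot: "\<forall>l\<in>set ls. wflit (length b) (dom \<sigma>) l \<Longrightarrow> ext \<sigma> \<tau> \<Longrightarrow> clv b \<sigma> ls = Some (tcl b \<tau> ls)"
  by (induction ls) (auto simp: tcl_def litv_tot split: bool.split)

lemma ext_upd: "\<sigma> p = None \<Longrightarrow> ext (\<sigma>(p \<mapsto> v)) \<tau> \<longleftrightarrow> ext \<sigma> \<tau> \<and> \<tau> p = v"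
  by (auto simp: ext_def)

lemma exec_nodl: "wfo (length b) (dom \<sigma>) ops \<Longrightarrow> Deadlock \<notin> set (exec b ops \<sigma> fl)"
proof (induction ops arbitrary: \<sigma> fl)
  case Nil
  then show ?case by simp
next
  case (Cons op1 ops)
  show ?case
  proof (cases op1)
    case (OSplit p)
    then have "\<sigma> p = None" "wfo (length b) (dom (\<sigma>(p \<mapsto> v))) ops" for v using Cons.prems by auto
    then show ?thesis using OSplit Cons.IH[of "\<sigma>(p \<mapsto> True)"] Cons.IH[of "\<sigma>(p \<mapsto> False)"]
      by (auto simp del: fun_upd_apply)
  next
    case (OCl ls)
    then show ?thesis using Cons clv_tot[OF _ ext_tau0, of ls b \<sigma>] by (auto split: bool.split)
  next
    case (OOut l)
    then show ?thesis using Cons litv_tot[OF _ ext_tau0, of b \<sigma> l] by (auto split: bool.split)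
  qed
qed

lemma exec_acc: "wfo (length b) (dom \<sigma>) ops \<Longrightarrow>
   Ok True \<in> set (exec b ops \<sigma> fl) \<longleftrightarrow> (\<exists>\<tau>. ext \<sigma> \<tau> \<and> acc b \<tau> ops fl)"
proof (induction ops arbitrary: \<sigma> fl)
  case Nil
  then show ?case using ext_tau0 by auto
next
  case (Cons op1 ops)
  show ?case
  proof (cases op1)
    case (OSplit p)
    then have p: "\<sigma> p = None" and w: "wfo (length b) (dom (\<sigma>(p \<mapsto> v))) ops" for v
      using Cons.prems by auto
    have "Ok True \<in> set (exec b (op1 # ops) \<sigma> fl) \<longleftrightarrow>
       (\<exists>v. Ok True \<in> set (exec b ops (\<sigma>(p \<mapsto> v)) fl))"
      using OSplit p by (auto simp del: fun_upd_apply) (metis (full_types))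
    also have "\<dots> \<longleftrightarrow> (\<exists>v \<tau>. ext (\<sigma>(p \<mapsto> v)) \<tau> \<and> acc b \<tau> ops fl)"
      using Cons.IH[OF w] by blast
    also have "\<dots> \<longleftrightarrow> (\<exists>\<tau>. ext \<sigma> \<tau> \<and> acc b \<tau> (op1 # ops) fl)"
      using OSplit by (auto simp: ext_upd[of \<sigma> p, OF p])
    finally show ?thesis .
  next
    case (OCl ls)
    then have w: "\<forall>l\<in>set ls. wflit (length b) (dom \<sigma>) l" "wfo (length b) (dom \<sigma>) ops"
      using Cons.prems by auto
    have e: "ext \<sigma> \<tau> \<Longrightarrow> clv b \<sigma> ls = Some (tcl b \<tau> ls)" for \<tau> using clv_tot[OF w(1)] by blast
    show ?thesis
    proof (cases "tcl b (tau0 \<sigma>) ls")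
      case True
      then have "ext \<sigma> \<tau> \<Longrightarrow> tcl b \<tau> ls" for \<tau> using e[of \<tau>] e[OF ext_tau0] by simp
      then show ?thesis using OCl e[OF ext_tau0] True Cons.IH[OF w(2)] by auto
    next
      case False
      then have "ext \<sigma> \<tau> \<Longrightarrow> \<not> tcl b \<tau> ls" for \<tau> using e[of \<tau>] e[OF ext_tau0] by simp
      then show ?thesis using OCl e[OF ext_tau0] False ext_tau0 by auto
    qed
  next
    case (OOut l)
    then have w: "wflit (length b) (dom \<sigma>) l" "wfo (length b) (dom \<sigma>) ops"
      using Cons.prems by auto
    have e: "ext \<sigma> \<tau> \<Longrightarrow> litv b \<sigma> l = Some (tlit b \<tau> l)" for \<tau> using litv_tot[OF w(1)] by blast
    have "ext \<sigma> \<tau> \<Longrightarrow> tlit b \<tau> l = tlit b (tau0 \<sigma>) l" for \<tau> using e[of \<tau>] e[OF ext_tau0] by simp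
    then show ?thesis using OOut e[OF ext_tau0] Cons.IH[OF w(2)] by auto
  qed
qed


lemma acc_True: "acc b \<tau> ops True"
  by (induction b \<tau> ops True rule: acc.induct) auto

lemma acc_app: "acc b \<tau> (A @ B) fl \<Longrightarrow> acc b \<tau> A fl \<or> acc b \<tau> B fl"
proof (induction A arbitrary: fl)
  case Nil
  then show ?case by simp
next
  case (Cons op1 A)
  show ?case
  proof (cases op1)
    case (OOut l)
    then show ?thesis using Cons.prems Cons.IH[of "fl \<or> tlit b \<tau> l"]
      by (cases "tlit b \<tau> l") (auto simp: acc_True)
  qed (use Cons in \<open>auto split: if_splits\<close>)
qed

lemma acc_concat: "acc b \<tau> (concat Bs) False \<Longrightarrow> \<exists>B\<in>set Bs. acc b \<tau> B False"
  by (induction Bs) (auto dest: acc_app)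

lemma acc_allok: "(\<forall>ls. OCl ls \<in> set ops \<longrightarrow> tcl b \<tau> ls) \<Longrightarrow>
   acc b \<tau> ops fl = (fl \<or> (\<exists>l. OOut l \<in> set ops \<and> tlit b \<tau> l))"
proof (induction ops arbitrary: fl)
  case Nil
  then show ?case by simp
next
  case (Cons op1 ops)
  then show ?case by (cases op1) auto
qed

lemma acc_noout: "(\<forall>l. OOut l \<notin> set A) \<Longrightarrow>
   acc b \<tau> (A @ B) fl = (if (\<forall>ls. OCl ls \<in> set A \<longrightarrow> tcl b \<tau> ls) then acc b \<tau> B fl else fl)"
proof (induction A arbitrary: fl)
  case Nil
  then show ?case by simp
next
  case (Cons op1 A)
  then show ?case by (cases op1) auto
qed

lemma eval_gates_append: "eval_gates x (A @ B) vs = eval_gates x B (eval_gates x A vs)"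
  by (induction A arbitrary: vs) auto

lemma eval_gates_snoc: "eval_gates x (C @ [g]) vs = eval_gates x C vs @ [gate_val x (eval_gates x C vs) g]"
  by (simp add: eval_gates_append)

lemma length_eval_gates: "length (eval_gates x C vs) = length vs + length C"
  by (induction C arbitrary: vs) auto

lemma eval_gates_nth: "i < length C \<Longrightarrow>
  eval_gates x C [] ! i = gate_val x (take i (eval_gates x C [])) (C ! i)"
proof (induction C arbitrary: i rule: rev_induct)
  case Nil
  then show ?case by simp
next
  case (snoc g C)
  show ?case
  proof (cases "i < length C")
    case True
    then show ?thesis using snoc.IH[OF True]
      by (simp add: eval_gates_snoc nth_append length_eval_gates)
  next
    case False
    then have "i = length C" using snoc.prems by simp
    then show ?thesis by (simp add: eval_gates_snoc nth_append length_eval_gates)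
  qed
qed

lemma eval_gates_uniq: "(\<forall>i<length C. V i = gate_val x (map V [0..<i]) (C ! i)) \<Longrightarrow>
  eval_gates x C [] = map V [0..<length C]"
proof (induction C rule: rev_induct)
  case Nil
  then show ?case by simp
next
  case (snoc g C)
  have "eval_gates x C [] = map V [0..<length C]"
    using snoc.prems by (intro snoc.IH) (auto simp: nth_append)
  moreover have "V (length C) = gate_val x (map V [0..<length C]) g"
    using snoc.prems[rule_format, of "length C"] by simp
  ultimately show ?case by (simp add: eval_gates_snoc)
qed


definition cp :: "nat \<Rightarrow> nat \<Rightarrow> nat" where "cp l i = Suc (prod_encode (l, 2 * i))"
definition gp :: "nat \<Rightarrow> nat \<Rightarrow> nat" where "gp l i = Suc (prod_encode (l, Suc (2 * i)))"

lemma cp_eq[simp]: "cp l i = cp l' i' \<longleftrightarrow> l = l' \<and> i = i'" by (auto simp: cp_def)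
lemma gp_eq[simp]: "gp l i = gp l' i' \<longleftrightarrow> l = l' \<and> i = i'" by (auto simp: gp_def)
lemma cp_gp[simp]: "cp l i \<noteq> gp l' i'" "gp l' i' \<noteq> cp l i"
  by (auto simp: cp_def gp_def) presburger+

fun neg :: "lit \<Rightarrow> lit" where
  "neg (LC c) = LC (\<not> c)" | "neg (LA p a) = LA (\<not> p) a"

definition wx :: "nat \<Rightarrow> nat \<Rightarrow> nat \<Rightarrow> lit" where
  "wx n l j = (if j < n then LA True (AIn (Suc j)) else if j < n + l then LA True (APar (cp l (j - n))) else LC False)"

definition wg :: "nat \<Rightarrow> nat \<Rightarrow> nat \<Rightarrow> lit" where
  "wg l i j = (if j < i then LA True (APar (gp l j)) else LC False)"

fun gcl :: "nat \<Rightarrow> nat \<Rightarrow> nat \<Rightarrow> gate \<Rightarrow> lit list list" where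
  "gcl n l i (GIn j) = (let Q = LA True (APar (gp l i)); W = wx n l j in [[neg Q, W], [Q, neg W]])"
| "gcl n l i (GConst c) = (let Q = LA True (APar (gp l i)) in [[if c then Q else neg Q]])"
| "gcl n l i (GNot j) = (let Q = LA True (APar (gp l i)); V = wg l i j in [[neg Q, neg V], [Q, V]])"
| "gcl n l i (GAnd j k) = (let Q = LA True (APar (gp l i)); A = wg l i j; B = wg l i k in
      [[neg Q, A], [neg Q, B], [Q, neg A, neg B]])"
| "gcl n l i (GOr j k) = (let Q = LA True (APar (gp l i)); A = wg l i j; B = wg l i k in
      [[Q, neg A], [Q, neg B], [neg Q, A, B]])"

definition outl :: "(nat \<Rightarrow> gate list) \<Rightarrow> nat \<Rightarrow> lit" where
  "outl C l = (if C l = [] then LC False else LA True (APar (gp l (length (C l) - 1))))"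

definition splits_of :: "(nat \<Rightarrow> gate list) \<Rightarrow> nat \<Rightarrow> nat list" where
  "splits_of C l = map (cp l) [0..<l] @ map (gp l) [0..<length (C l)]"

definition cls_of :: "nat \<Rightarrow> (nat \<Rightarrow> gate list) \<Rightarrow> nat \<Rightarrow> lit list list" where
  "cls_of n C l = concat (map (\<lambda>i. gcl n l i (C l ! i)) [0..<length (C l)])"

definition block :: "nat \<Rightarrow> (nat \<Rightarrow> gate list) \<Rightarrow> nat \<Rightarrow> op list" where
  "block n C l = map OSplit (splits_of C l) @ map OCl (cls_of n C l) @ [OOut (outl C l)]"

definition allops :: "nat \<Rightarrow> nat \<Rightarrow> (nat \<Rightarrow> gate list) \<Rightarrow> op list" where
  "allops n M C = concat (map (block n C) [0..<Suc M])"

definition cert :: "(nat \<Rightarrow> bool) \<Rightarrow> nat \<Rightarrow> bool list" where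
  "cert \<tau> l = map (\<lambda>i. \<tau> (cp l i)) [0..<l]"

definition gv :: "(nat \<Rightarrow> bool) \<Rightarrow> nat \<Rightarrow> nat \<Rightarrow> bool list" where
  "gv \<tau> l i = map (\<lambda>j. \<tau> (gp l j)) [0..<i]"

lemma tlit_neg[simp]: "tlit b \<tau> (neg l) = (\<not> tlit b \<tau> l)"
  by (cases l) auto

lemma tlit_wx: "length b = n \<Longrightarrow> tlit b \<tau> (wx n l j) = wire (b @ cert \<tau> l) j"
  by (auto simp: wx_def wire_def cert_def nth_append)

lemma tlit_wg: "tlit b \<tau> (wg l i j) = wire (gv \<tau> l i) j"
  by (auto simp: wg_def wire_def gv_def)

lemma gcl_sem: "length b = n \<Longrightarrow>
  (\<forall>cl\<in>set (gcl n l i g). tcl b \<tau> cl) \<longleftrightarrow> \<tau> (gp l i) = gate_val (b @ cert \<tau> l) (gv \<tau> l i) g"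
  by (cases g) (auto simp: tcl_def Let_def tlit_wx tlit_wg)

lemma acc_splits[simp]: "acc b \<tau> (map OSplit ps @ B) fl = acc b \<tau> B fl"
  by (induction ps) auto

lemma acc_cls: "acc b \<tau> (map OCl cls @ B) fl = (if \<forall>cl\<in>set cls. tcl b \<tau> cl then acc b \<tau> B fl else fl)"
  by (induction cls) auto

lemma acc_block_sound:
  assumes "length b = n" "acc b \<tau> (block n C l) False"
  shows "circ_eval (C l) (b @ cert \<tau> l)"
proof -
  have "acc b \<tau> (map OCl (cls_of n C l) @ [OOut (outl C l)]) False"
    using assms(2) by (simp add: block_def)
  then have ok: "\<forall>cl\<in>set (cls_of n C l). tcl b \<tau> cl" and o: "tlit b \<tau> (outl C l)"
    by (auto simp: acc_cls split: if_splits)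
  have g: "\<forall>i<length (C l). \<tau> (gp l i) = gate_val (b @ cert \<tau> l) (map (\<lambda>j. \<tau> (gp l j)) [0..<i]) (C l ! i)"
  proof (intro allI impI)
    fix i assume i: "i < length (C l)"
    then have "\<forall>cl\<in>set (gcl n l i (C l ! i)). tcl b \<tau> cl"
      using ok by (auto simp: cls_of_def)
    then show "\<tau> (gp l i) = gate_val (b @ cert \<tau> l) (map (\<lambda>j. \<tau> (gp l j)) [0..<i]) (C l ! i)"
      using gcl_sem[OF assms(1)] by (simp add: gv_def)
  qed
  have e: "eval_gates (b @ cert \<tau> l) (C l) [] = map (\<lambda>j. \<tau> (gp l j)) [0..<length (C l)]"
    by (rule eval_gates_uniq[OF g])
  have ne: "C l \<noteq> []" and t: "\<tau> (gp l (length (C l) - 1))" using o by (auto simp: outl_def split: if_splits)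
  then show ?thesis unfolding circ_eval_def e by (simp add: last_map)
qed

definition c0 :: "nat \<Rightarrow> bool list \<Rightarrow> nat \<Rightarrow> bool list" where
  "c0 l c l' = (if l' = l then c else replicate l' False)"

definition evs :: "bool list \<Rightarrow> (nat \<Rightarrow> gate list) \<Rightarrow> nat \<Rightarrow> bool list \<Rightarrow> nat \<Rightarrow> bool list" where
  "evs b C l c l' = eval_gates (b @ c0 l c l') (C l') []"

definition tauc :: "bool list \<Rightarrow> (nat \<Rightarrow> gate list) \<Rightarrow> nat \<Rightarrow> bool list \<Rightarrow> nat \<Rightarrow> bool" where
  "tauc b C l c q = (case prod_decode (q - 1) of (l', t) \<Rightarrow>
     if even t then (l' = l \<and> t div 2 < l \<and> c ! (t div 2)) else wire (evs b C l c l') (t div 2))"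

lemma tauc_cp[simp]: "tauc b C l c (cp l' i) = (l' = l \<and> i < l \<and> c ! i)"
  by (simp add: tauc_def cp_def)

lemma tauc_gp[simp]: "tauc b C l c (gp l' i) = wire (evs b C l c l') i"
  by (simp add: tauc_def gp_def)

lemma cert_tauc: "length c = l \<Longrightarrow> cert (tauc b C l c) l' = c0 l c l'"
  by (auto simp: cert_def c0_def intro: nth_equalityI)

lemma length_evs: "length (evs b C l c l') = length (C l')"
  by (simp add: evs_def length_eval_gates)

lemma gv_tauc: "i \<le> length (C l') \<Longrightarrow> gv (tauc b C l c) l' i = take i (evs b C l c l')"
  by (auto simp: gv_def wire_def length_evs intro: nth_equalityI)

lemma tauc_cls:
  assumes "length b = n" "length c = l"
  shows "\<forall>cl\<in>set (cls_of n C l'). tcl b (tauc b C l c) cl"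
proof
  fix cl assume "cl \<in> set (cls_of n C l')"
  then obtain i where i: "i < length (C l')" and cl: "cl \<in> set (gcl n l' i (C l' ! i))"
    by (auto simp: cls_of_def)
  have "tauc b C l c (gp l' i) = gate_val (b @ cert (tauc b C l c) l') (gv (tauc b C l c) l' i) (C l' ! i)"
    using i eval_gates_nth[OF i, of "b @ c0 l c l'"]
    by (simp add: cert_tauc[OF assms(2)] gv_tauc wire_def length_evs evs_def length_eval_gates)
  then show "tcl b (tauc b C l c) cl" using gcl_sem[OF assms(1)] cl by blast
qed

lemma acc_complete:
  assumes "length b = n" "length c = l" "l \<le> M" "circ_eval (C l) (b @ c)"
  shows "acc b (tauc b C l c) (allops n M C) False"
proof -
  have ok: "\<forall>ls. OCl ls \<in> set (allops n M C) \<longrightarrow> tcl b (tauc b C l c) ls"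
    using tauc_cls[OF assms(1,2)] by (auto simp: allops_def block_def)
  have mem: "OOut (outl C l) \<in> set (allops n M C)"
    using assms(3) by (force simp: allops_def block_def)
  have ev: "evs b C l c l = eval_gates (b @ c) (C l) []" by (simp add: evs_def c0_def)
  have ne: "C l \<noteq> []" using assms(4) by (auto simp: circ_eval_def)
  have "tlit b (tauc b C l c) (outl C l)"
    using assms(4) ne by (auto simp: outl_def ev circ_eval_def wire_def length_eval_gates last_conv_nth Let_def)
  then show ?thesis using acc_allok[OF ok] mem by blast
qed


definition spl :: "op list \<Rightarrow> nat set" where "spl A = {p. OSplit p \<in> set A}"

lemma wfo_app: "wfo n D (A @ B) = (wfo n D A \<and> wfo n (D \<union> spl A) B)"
proof (induction A arbitrary: D)
  case Nil
  then show ?case by (simp add: spl_def)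
next
  case (Cons op1 A)
  then show ?case
  proof (cases op1)
    case (OSplit p)
    have "insert p D \<union> spl A = D \<union> spl (op1 # A)" using OSplit by (auto simp: spl_def)
    then show ?thesis using OSplit Cons.IH by simp
  qed (auto simp: spl_def)
qed

lemma wfo_splits: "wfo n D (map OSplit ps) = (distinct ps \<and> set ps \<inter> D = {})"
  by (induction ps arbitrary: D) auto

lemma wfo_tail: "wfo n D (map OCl cls @ [OOut o1]) = ((\<forall>cl\<in>set cls. \<forall>l\<in>set cl. wflit n D l) \<and> wflit n D o1)"
  by (induction cls) auto

lemma wflit_neg[simp]: "wflit n D (neg l) = wflit n D l"
  by (cases l) auto

lemma wflit_wx: "(\<forall>i<l. cp l i \<in> D) \<Longrightarrow> wflit n D (wx n l j)"
  by (auto simp: wx_def)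

lemma wflit_wg: "(\<forall>j<i. gp l j \<in> D) \<Longrightarrow> wflit n D (wg l i j)"
  by (auto simp: wg_def)

lemma wflit_gcl: "(\<forall>i'<l. cp l i' \<in> D) \<Longrightarrow> (\<forall>j\<le>i. gp l j \<in> D) \<Longrightarrow>
   cl \<in> set (gcl n l i g) \<Longrightarrow> x \<in> set cl \<Longrightarrow> wflit n D x"
  by (cases g) (auto simp: Let_def wflit_wx wflit_wg)

lemma spl_block: "spl (block n C l) = set (splits_of C l)"
  by (auto simp: spl_def block_def)

lemma wfo_block: assumes d: "set (splits_of C l) \<inter> D = {}" shows "wfo n D (block n C l)"
proof -
  have dist: "distinct (splits_of C l)" by (auto simp: splits_of_def distinct_map inj_on_def)
  let ?D = "D \<union> spl (map OSplit (splits_of C l))"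
  have sp: "spl (map OSplit (splits_of C l)) = set (splits_of C l)" by (auto simp: spl_def)
  have c: "\<forall>i'<l. cp l i' \<in> ?D" and g: "\<forall>j<length (C l). gp l j \<in> ?D"
    unfolding sp by (auto simp: splits_of_def)
  have lits: "\<forall>cl\<in>set (cls_of n C l). \<forall>x\<in>set cl. wflit n ?D x"
  proof (intro ballI)
    fix cl x assume "cl \<in> set (cls_of n C l)" "x \<in> set cl"
    then obtain i where i: "i < length (C l)" "cl \<in> set (gcl n l i (C l ! i))"
      by (auto simp: cls_of_def)
    show "wflit n ?D x" using wflit_gcl[OF c _ i(2) \<open>x \<in> set cl\<close>] g i(1) by auto
  qed
  have o: "wflit n ?D (outl C l)"
    unfolding sp by (auto simp: outl_def splits_of_def)
  have t: "wfo n ?D (map OCl (cls_of n C l) @ [OOut (outl C l)])" unfolding wfo_tail using lits o by blast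
  have "wfo n D (map OSplit (splits_of C l))" unfolding wfo_splits using dist d by blast
  then show ?thesis unfolding block_def using t wfo_app[of n D "map OSplit (splits_of C l)"] by simp
qed

lemma splits_disj: "l \<noteq> l' \<Longrightarrow> set (splits_of C l) \<inter> set (splits_of C l') = {}"
  by (auto simp: splits_of_def)

lemma wfo_blocks: "distinct ls \<Longrightarrow> (\<forall>l\<in>set ls. set (splits_of C l) \<inter> D = {}) \<Longrightarrow>
   wfo n D (concat (map (block n C) ls))"
proof (induction ls arbitrary: D)
  case Nil
  then show ?case by simp
next
  case (Cons l ls)
  have "wfo n (D \<union> set (splits_of C l)) (concat (map (block n C) ls))"
  proof (intro Cons.IH)
    show "distinct ls" using Cons.prems by simp
    show "\<forall>l'\<in>set ls. set (splits_of C l') \<inter> (D \<union> set (splits_of C l)) = {}"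
    proof
      fix l' assume l': "l' \<in> set ls"
      then have "l \<noteq> l'" using Cons.prems by auto
      then show "set (splits_of C l') \<inter> (D \<union> set (splits_of C l)) = {}"
        using splits_disj[of l l' C] Cons.prems l' by auto
    qed
  qed
  then show ?case using Cons.prems wfo_block[of C l D n] by (simp add: wfo_app spl_block)
qed

lemma wfo_allops: "wfo n {} (allops n M C)"
  unfolding allops_def by (rule wfo_blocks) auto


fun atok :: "atom \<Rightarrow> bool" where "atok (AIn j) = (j \<ge> 1)" | "atok (APar p) = (p \<ge> 1)"
fun litok :: "lit \<Rightarrow> bool" where "litok (LC c) = True" | "litok (LA pol a) = atok a"
fun opok :: "op \<Rightarrow> bool" where
  "opok (OSplit p) = (p \<ge> 1)" | "opok (OCl ls) = (\<forall>l\<in>set ls. litok l)" | "opok (OOut l) = litok l"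

lemma lcode_ok: "litok l \<Longrightarrow> basic_of (lcode l) = Some a \<Longrightarrow> basic_ok a"
  apply (cases l)
  subgoal for c by (cases c) auto
  subgoal for pol at by (cases pol; cases at) auto
  done

lemma clcode_ok: "\<forall>l\<in>set ls. litok l \<Longrightarrow> u \<in> set (clcode ls) \<Longrightarrow> basic_of u = Some a \<Longrightarrow> basic_ok a"
  by (induction ls) (auto dest: lcode_ok)

lemma opcode_ok: "opok o1 \<Longrightarrow> u \<in> set (opcode o1) \<Longrightarrow> basic_of u = Some a \<Longrightarrow> basic_ok a"
  by (cases o1) (auto dest: lcode_ok clcode_ok)

lemma prog_SIS: "\<forall>o1\<in>set ops. opok o1 \<Longrightarrow> prog ops \<in> SIS_br"
  by (auto simp: SIS_br_def prog_def dest: opcode_ok)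

lemma litok_neg[simp]: "litok (neg l) = litok l" by (cases l) auto

lemma allops_ok: "\<forall>o1\<in>set (allops n M C). opok o1"
proof -
  have wx: "litok (wx n l j)" for l j by (auto simp: wx_def cp_def)
  have wg: "litok (wg l i j)" for l i j by (auto simp: wg_def gp_def)
  have g: "cl \<in> set (gcl n l i g) \<Longrightarrow> x \<in> set cl \<Longrightarrow> litok x" for cl x l i g
    by (cases g) (auto simp: Let_def wx wg gp_def)
  show ?thesis
    by (auto simp: allops_def block_def splits_of_def cp_def gp_def outl_def cls_of_def dest: g)
qed

lemma sum_list_bound: "(\<forall>x\<in>set xs. f x \<le> B) \<Longrightarrow> sum_list (map f xs) \<le> B * length xs"
  by (induction xs) auto

lemma len_prog: "length (prog ops) = sum_list (map (\<lambda>o1. length (opcode o1)) ops) + 1"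
  by (simp add: prog_def length_concat comp_def)

lemma sum_list_concat: "sum_list (concat xss) = sum_list (map sum_list xss)"
  by (induction xss) auto

lemma gcl_size: "sum_list (map (\<lambda>cl. length (clcode cl)) (gcl n l i g)) \<le> 21"
  by (cases g) (auto simp: Let_def length_clcode)

lemma block_size: "sum_list (map (\<lambda>o1. length (opcode o1)) (block n C l)) \<le> l + 22 * length (C l) + 2"
proof -
  have s: "sum_list (map (\<lambda>o1. length (opcode o1)) (map OSplit (splits_of C l))) = l + length (C l)"
    by (simp add: splits_of_def comp_def sum_list_triv)
  have c: "sum_list (map (\<lambda>o1. length (opcode o1)) (map OCl (cls_of n C l))) \<le> 21 * length (C l)"
  proof -
    have "sum_list (map (\<lambda>o1. length (opcode o1)) (map OCl (cls_of n C l)))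
        = sum_list (map (\<lambda>i. sum_list (map (\<lambda>cl. length (clcode cl)) (gcl n l i (C l ! i)))) [0..<length (C l)])"
      by (simp add: cls_of_def comp_def map_concat sum_list_concat)
    also have "\<dots> \<le> 21 * length [0..<length (C l)]"
      by (rule sum_list_bound) (simp add: gcl_size)
    finally show ?thesis by simp
  qed
  show ?thesis using s c by (simp add: block_def)
qed

lemma allops_size:
  assumes "\<forall>l\<le>M. length (C l) \<le> B"
  shows "length (prog (allops n M C)) \<le> Suc M * (M + 22 * B + 2) + 1"
proof -
  have "length (prog (allops n M C)) =
     sum_list (map (\<lambda>l. sum_list (map (\<lambda>o1. length (opcode o1)) (block n C l))) [0..<Suc M]) + 1"
    by (simp add: len_prog allops_def map_concat sum_list_concat comp_def)
  also have "\<dots> \<le> (M + 22 * B + 2) * length [0..<Suc M] + 1"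
  proof -
    have "\<forall>l\<in>set [0..<Suc M]. sum_list (map (\<lambda>o1. length (opcode o1)) (block n C l)) \<le> M + 22 * B + 2"
    proof
      fix l assume "l \<in> set [0..<Suc M]"
      then have "l \<le> M" "length (C l) \<le> B" using assms by auto
      then show "sum_list (map (\<lambda>o1. length (opcode o1)) (block n C l)) \<le> M + 22 * B + 2"
        using block_size[of n C l] by linarith
    qed
    then show ?thesis using sum_list_bound by (metis add_le_mono1)
  qed
  finally show ?thesis by (simp add: mult.commute)
qed


definition Q :: "(nat \<Rightarrow> nat) \<Rightarrow> bool" where
  "Q f \<longleftrightarrow> (\<exists>c d. \<forall>n. f n \<le> c * Suc n ^ d)"

lemma suc_pow_le: "Suc n ^ d \<le> 2 ^ d * n ^ d + 2 ^ d"
proof (cases "n = 0")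
  case True
  have "(1::nat) \<le> 2 ^ d" by simp
  then show ?thesis using True by (metis Suc_eq_plus1 One_nat_def add.commute power_one trans_le_add1 power_0 le_add2 order_trans)
next
  case False
  then have "Suc n ^ d \<le> (2 * n) ^ d" by (intro power_mono) auto
  then show ?thesis by (simp add: power_mult_distrib)
qed

lemma Q_pb: "Q f \<Longrightarrow> poly_bounded f"
proof -
  assume "Q f"
  then obtain c d where cd: "\<forall>n. f n \<le> c * Suc n ^ d" by (auto simp: Q_def)
  have "f n \<le> (c * 2 ^ d) * n ^ d + c * 2 ^ d" for n
  proof -
    have "f n \<le> c * Suc n ^ d" using cd by blast
    also have "\<dots> \<le> c * (2 ^ d * n ^ d + 2 ^ d)" by (intro mult_le_mono2 suc_pow_le)
    finally show ?thesis by (simp add: algebra_simps)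
  qed
  then show ?thesis unfolding poly_bounded_def by blast
qed

lemma pb_Q: "poly_bounded f \<Longrightarrow> Q f"
proof -
  assume "poly_bounded f"
  then obtain c k where ck: "\<forall>n. f n \<le> c * n ^ k + c" by (auto simp: poly_bounded_def)
  have "f n \<le> (2 * c) * Suc n ^ k" for n
  proof -
    have "n ^ k \<le> Suc n ^ k" by (intro power_mono) auto
    moreover have "1 \<le> Suc n ^ k" by simp
    ultimately have "c * n ^ k + c \<le> c * Suc n ^ k + c * Suc n ^ k"
      by (metis add_le_mono mult_le_mono2 nat_mult_1_right)
    then show ?thesis using ck[rule_format, of n] by simp
  qed
  then show ?thesis unfolding Q_def by blast
qed

lemma Q_const: "Q (\<lambda>n. c)"
  unfolding Q_def by (rule exI[of _ c], rule exI[of _ 0]) simp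

lemma Q_id: "Q (\<lambda>n. n)"
  unfolding Q_def by (rule exI[of _ 1], rule exI[of _ 1]) simp

lemma Q_add: "Q f \<Longrightarrow> Q g \<Longrightarrow> Q (\<lambda>n. f n + g n)"
proof -
  assume "Q f" "Q g"
  then obtain c1 d1 c2 d2 where 1: "\<forall>n. f n \<le> c1 * Suc n ^ d1" and 2: "\<forall>n. g n \<le> c2 * Suc n ^ d2"
    by (auto simp: Q_def)
  have "f n + g n \<le> (c1 + c2) * Suc n ^ (d1 + d2)" for n
  proof -
    have a: "Suc n ^ d1 \<le> Suc n ^ (d1 + d2)" "Suc n ^ d2 \<le> Suc n ^ (d1 + d2)"
      by (intro power_increasing; simp)+
    have "f n + g n \<le> c1 * Suc n ^ d1 + c2 * Suc n ^ d2" using 1 2 by (simp add: add_mono)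
    also have "\<dots> \<le> c1 * Suc n ^ (d1 + d2) + c2 * Suc n ^ (d1 + d2)"
      using a by (intro add_mono mult_le_mono2)
    finally show ?thesis by (simp add: algebra_simps)
  qed
  then show ?thesis unfolding Q_def by blast
qed

lemma Q_mult: "Q f \<Longrightarrow> Q g \<Longrightarrow> Q (\<lambda>n. f n * g n)"
proof -
  assume "Q f" "Q g"
  then obtain c1 d1 c2 d2 where 1: "\<forall>n. f n \<le> c1 * Suc n ^ d1" and 2: "\<forall>n. g n \<le> c2 * Suc n ^ d2"
    by (auto simp: Q_def)
  have "f n * g n \<le> (c1 * c2) * Suc n ^ (d1 + d2)" for n
  proof -
    have "f n * g n \<le> (c1 * Suc n ^ d1) * (c2 * Suc n ^ d2)" using 1 2 by (simp add: mult_le_mono)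
    then show ?thesis by (simp add: algebra_simps power_add)
  qed
  then show ?thesis unfolding Q_def by blast
qed

lemma Q_pow: "Q f \<Longrightarrow> Q (\<lambda>n. f n ^ k)"
proof -
  assume "Q f"
  then obtain c d where 1: "\<forall>n. f n \<le> c * Suc n ^ d" by (auto simp: Q_def)
  have "f n ^ k \<le> c ^ k * Suc n ^ (d * k)" for n
  proof -
    have "f n ^ k \<le> (c * Suc n ^ d) ^ k" using 1 by (simp add: power_mono)
    then show ?thesis by (simp add: power_mult_distrib power_mult)
  qed
  then show ?thesis unfolding Q_def by blast
qed

lemma Q_le: "Q g \<Longrightarrow> (\<And>n. f n \<le> g n) \<Longrightarrow> Q f"
  unfolding Q_def by (meson le_trans)


lemma exec_main:
  assumes "length b = n"
  shows "Deadlock \<notin> set (exec b (allops n M C) Map.empty False)"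
    "Ok True \<in> set (exec b (allops n M C) Map.empty False) \<longleftrightarrow> (\<exists>\<tau>. acc b \<tau> (allops n M C) False)"
  using exec_nodl[of b Map.empty "allops n M C" False] exec_acc[of b Map.empty "allops n M C" False]
    wfo_allops[of n M C] assms by (auto simp: ext_def)

lemma acc_allops_sound: "length b = n \<Longrightarrow> acc b \<tau> (allops n M C) False \<Longrightarrow>
   \<exists>l\<le>M. circ_eval (C l) (b @ cert \<tau> l)"
proof -
  assume b: "length b = n" and a: "acc b \<tau> (allops n M C) False"
  obtain B where "B \<in> set (map (block n C) [0..<Suc M])" "acc b \<tau> B False"
    using acc_concat[of b \<tau> "map (block n C) [0..<Suc M]"] a unfolding allops_def by blast
  then obtain l where l: "l < Suc M" "acc b \<tau> (block n C l) False" by (auto simp del: upt_Suc)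
  then show ?thesis using acc_block_sound[OF b] less_Suc_eq_le by blast
qed

lemma length_cert[simp]: "length (cert \<tau> l) = l" by (simp add: cert_def)

theorem np_sub: "L \<in> NPpoly \<Longrightarrow> L \<in> lang_of ` P_lsis"
proof -
  assume "L \<in> NPpoly"
  then obtain k g where Pg: "Ppoly2 g" and ch: "\<forall>w. w \<in> L \<longleftrightarrow> (\<exists>c. length c \<le> length w ^ k \<and> g w c)"
    by (auto simp: NPpoly_def)
  obtain h where pbh: "poly_bounded h" and hc: "\<forall>n m. \<exists>C. length C \<le> h (n + m) \<and>
         (\<forall>w c. length w = n \<longrightarrow> length c = m \<longrightarrow> circ_eval C (w @ c) = g w c)"
    using Pg by (auto simp: Ppoly2_def)
  obtain a e where he: "\<forall>N. h N \<le> a * N ^ e + a" using pbh by (auto simp: poly_bounded_def)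
  define Cn where "Cn n l = (SOME C. length C \<le> h (n + l) \<and>
         (\<forall>w c. length w = n \<longrightarrow> length c = l \<longrightarrow> circ_eval C (w @ c) = g w c))" for n l
  have Cn: "length (Cn n l) \<le> h (n + l) \<and>
         (\<forall>w c. length w = n \<longrightarrow> length c = l \<longrightarrow> circ_eval (Cn n l) (w @ c) = g w c)" for n l
    unfolding Cn_def by (rule someI_ex[OF hc[rule_format, of n l]])
  define f where "f n w = (w \<in> L)" for n :: nat and w :: "bool list"
  define H where "H n = (n ^ k + 1) * (n ^ k + 22 * (a * (n + n ^ k) ^ e + a) + 2) + 1" for n
  have q1: "Q (\<lambda>n. n ^ k)" by (rule Q_pow[OF Q_id])
  have q2: "Q (\<lambda>n. n + n ^ k)" by (rule Q_add[OF Q_id q1])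
  have q3: "Q (\<lambda>n. (n + n ^ k) ^ e)" by (rule Q_pow[OF q2])
  have q4: "Q (\<lambda>n. a * (n + n ^ k) ^ e + a)" by (rule Q_add[OF Q_mult[OF Q_const q3] Q_const])
  have q5: "Q (\<lambda>n. n ^ k + 22 * (a * (n + n ^ k) ^ e + a) + 2)"
    by (rule Q_add[OF Q_add[OF q1 Q_mult[OF Q_const q4]] Q_const])
  have q6: "Q (\<lambda>n. (n ^ k + 1) * (n ^ k + 22 * (a * (n + n ^ k) ^ e + a) + 2))"
    by (rule Q_mult[OF Q_add[OF q1 Q_const] q5])
  have pH: "poly_bounded H"
    unfolding H_def by (rule Q_pb[OF Q_add[OF q6 Q_const]])
  have "f \<in> P_lsis"
    unfolding P_lsis_def
  proof (intro CollectI exI conjI allI)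
    show "poly_bounded H" by (fact pH)
    fix n
    let ?X = "prog (allops n (n ^ k) (Cn n))"
    have bnd: "\<forall>l\<le>n ^ k. length (Cn n l) \<le> a * (n + n ^ k) ^ e + a"
    proof (intro allI impI)
      fix l assume "l \<le> n ^ k"
      then have "(n + l) ^ e \<le> (n + n ^ k) ^ e" by (intro power_mono) auto
      then have "h (n + l) \<le> a * (n + n ^ k) ^ e + a" using he[rule_format, of "n + l"]
        by (meson add_le_mono1 le_trans mult_le_mono2)
      then show "length (Cn n l) \<le> a * (n + n ^ k) ^ e + a" using Cn[of n l] by linarith
    qed
    have len: "length ?X \<le> H n"
      using allops_size[OF bnd, of n] by (simp add: H_def)
    have sc: "splitting_computes ?X n (f n)"
      unfolding splitting_computes_def Let_def
    proof (intro allI impI conjI)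
      fix b :: "bool list" assume b: "length b = n"
      have r: "run ?X b 1 Map.empty False = exec b (allops n (n ^ k) (Cn n)) Map.empty False"
        using run_prog by simp
      show "Deadlock \<notin> set (run ?X b 1 Map.empty False)" unfolding r by (rule exec_main(1)[OF b])
      have "f n b \<longleftrightarrow> (\<exists>\<tau>. acc b \<tau> (allops n (n ^ k) (Cn n)) False)"
      proof
        assume "f n b"
        then obtain c where c: "length c \<le> n ^ k" "g b c" using ch b by (auto simp: f_def)
        have "circ_eval (Cn n (length c)) (b @ c)" using Cn[of n "length c"] b c by simp
        then show "\<exists>\<tau>. acc b \<tau> (allops n (n ^ k) (Cn n)) False"
          using acc_complete[OF b refl c(1)] by blast
      next
        assume "\<exists>\<tau>. acc b \<tau> (allops n (n ^ k) (Cn n)) False"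
        then obtain \<tau> l where l: "l \<le> n ^ k" "circ_eval (Cn n l) (b @ cert \<tau> l)"
          using acc_allops_sound[OF b] by blast
        then have "g b (cert \<tau> l)" using Cn[of n l] b by simp
        then show "f n b" using ch b l(1) by (auto simp: f_def)
      qed
      then show "f n b = (Ok True \<in> set (run ?X b 1 Map.empty False))"
        unfolding r using exec_main(2)[OF b] by simp
    qed
    show "\<exists>X\<in>SIS_br. length X \<le> H n \<and> splitting_computes X n (f n)"
      using prog_SIS[OF allops_ok] len sc by blast
  qed
  moreover have "lang_of f = L" by (simp add: lang_of_def f_def)
  ultimately show ?thesis by (metis image_eqI)
qed


fun dreply :: "bool list \<Rightarrow> (nat \<Rightarrow> bool) \<Rightarrow> basic \<Rightarrow> bool option" where
  "dreply b \<tau> (InGet j) = (if 1 \<le> j \<and> j \<le> length b then Some (b ! (j - 1)) else None)"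
| "dreply b \<tau> OutSetT = Some True"
| "dreply b \<tau> (Split p) = Some (\<tau> p)"
| "dreply b \<tau> (Reply p) = Some (\<tau> p)"

definition dstep :: "prim list \<Rightarrow> bool list \<Rightarrow> (nat \<Rightarrow> bool) \<Rightarrow> nat \<Rightarrow> nat option" where
  "dstep X b \<tau> i = (if i = 0 \<or> length X < i then None else
     (case X ! (i - 1) of Term \<Rightarrow> None
      | FJmp l \<Rightarrow> (if l = 0 then None else Some (i + l))
      | u \<Rightarrow> (case dreply b \<tau> (the (basic_of u)) of None \<Rightarrow> None | Some r \<Rightarrow> Some (next_pc u i r))))"

definition isout :: "prim list \<Rightarrow> nat \<Rightarrow> bool" where
  "isout X i = (1 \<le> i \<and> i \<le> length X \<and> basic_of (X ! (i - 1)) = Some OutSetT)"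

inductive reach :: "prim list \<Rightarrow> bool list \<Rightarrow> (nat \<Rightarrow> bool) \<Rightarrow> nat \<Rightarrow> nat \<Rightarrow> bool"
  for X b \<tau> where
  refl: "reach X b \<tau> i i"
| step: "reach X b \<tau> i j \<Longrightarrow> dstep X b \<tau> j = Some k \<Longrightarrow> reach X b \<tau> i k"

lemma reach_prepend: "reach X b \<tau> s j \<Longrightarrow> dstep X b \<tau> i = Some s \<Longrightarrow> reach X b \<tau> i j"
  by (induction rule: reach.induct) (auto intro: reach.intros)

lemma reach_first: "reach X b \<tau> i j \<Longrightarrow> j = i \<or> (\<exists>s. dstep X b \<tau> i = Some s \<and> reach X b \<tau> s j)"
  by (induction rule: reach.induct) (auto intro: reach.intros)

lemma prim_cases: "(u = Term \<Longrightarrow> P) \<Longrightarrow> (\<And>l. u = FJmp l \<Longrightarrow> P) \<Longrightarrow> (\<And>a. basic_of u = Some a \<Longrightarrow> P) \<Longrightarrow> P"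
  by (cases u) auto

lemma run_Term: "i < length X \<Longrightarrow> X ! i = Term \<Longrightarrow> run X b (Suc i) \<sigma> fl = [Ok fl]"
  by (subst run.simps) simp

lemma run_FJmp: "i < length X \<Longrightarrow> X ! i = FJmp l \<Longrightarrow>
   run X b (Suc i) \<sigma> fl = (if l = 0 then [Deadlock] else run X b (Suc i + l) \<sigma> fl)"
  by (subst run.simps) simp

lemma run_basic0: "i < length X \<Longrightarrow> basic_of (X ! i) = Some a \<Longrightarrow>
   run X b (Suc i) \<sigma> fl = (case a of Split p \<Rightarrow> (case \<sigma> p of Some _ \<Rightarrow> [Deadlock]
        | None \<Rightarrow> run X b (next_pc (X ! i) (Suc i) True) (\<sigma>(p \<mapsto> True)) fl @ run X b (next_pc (X ! i) (Suc i) False) (\<sigma>(p \<mapsto> False)) fl)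
      | _ \<Rightarrow> (case basic_reply b \<sigma> a of None \<Rightarrow> [Deadlock]
        | Some r \<Rightarrow> run X b (next_pc (X ! i) (Suc i) r) \<sigma> (fl \<or> a = OutSetT)))"
  apply (subst run.simps)
  apply (cases "X ! i"; cases a)
  apply (simp_all add: Let_def split: option.split)
  done

lemma run_basic: assumes "i < length X" "X ! i = u" "basic_of u = Some a" shows
  "   run X b (Suc i) \<sigma> fl = (case a of Split p \<Rightarrow> (case \<sigma> p of Some _ \<Rightarrow> [Deadlock]
        | None \<Rightarrow> run X b (next_pc u (Suc i) True) (\<sigma>(p \<mapsto> True)) fl @ run X b (next_pc u (Suc i) False) (\<sigma>(p \<mapsto> False)) fl)
      | _ \<Rightarrow> (case basic_reply b \<sigma> a of None \<Rightarrow> [Deadlock]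
        | Some r \<Rightarrow> run X b (next_pc u (Suc i) r) \<sigma> (fl \<or> a = OutSetT)))"
  using assms(3) unfolding assms(2)[symmetric] by (rule run_basic0[OF assms(1)])

lemma dstep_Term: "X ! i = Term \<Longrightarrow> dstep X b \<tau> (Suc i) = None"
  by (simp add: dstep_def)

lemma dstep_FJmp: "i < length X \<Longrightarrow> X ! i = FJmp l \<Longrightarrow>
   dstep X b \<tau> (Suc i) = (if l = 0 then None else Some (Suc i + l))"
  by (simp add: dstep_def)

lemma dstep_basic: "i < length X \<Longrightarrow> X ! i = u \<Longrightarrow> basic_of u = Some a \<Longrightarrow>
   dstep X b \<tau> (Suc i) = (case dreply b \<tau> a of None \<Rightarrow> None | Some r \<Rightarrow> Some (next_pc u (Suc i) r))"
  by (cases u) (auto simp: dstep_def)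

lemma isout_pc: "i < length X \<Longrightarrow> isout X (Suc i) = (basic_of (X ! i) = Some OutSetT)"
  by (simp add: isout_def)

lemma dreply_ext: "ext \<sigma> \<tau> \<Longrightarrow> basic_reply b \<sigma> a = Some r \<Longrightarrow> dreply b \<tau> a = Some r"
  by (cases a) (auto simp: ext_def split: if_splits)


lemma pc_cases: obtains "run X b pc \<sigma> fl = [Deadlock]" | i where "pc = Suc i" "i < length X"
proof (cases pc)
  case 0
  then show thesis using that(1) run_oob[of pc X b \<sigma> fl] by simp
next
  case (Suc i)
  show thesis
  proof (cases "i < length X")
    case True
    then show thesis using that(2) Suc by simp
  next
    case False
    then show thesis using that(1) run_oob[of pc X b \<sigma> fl] Suc by simp
  qed
qed

lemma run_complete:
  "Deadlock \<notin> set (run X b pc \<sigma> fl) \<Longrightarrow> ext \<sigma> \<tau> \<Longrightarrow> fl \<or> (\<exists>j. reach X b \<tau> pc j \<and> isout X j) \<Longrightarrow>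
   Ok True \<in> set (run X b pc \<sigma> fl)"
proof (induction "Suc (length X) - pc" arbitrary: pc \<sigma> fl rule: less_induct)
  case less
  show ?case
  proof (cases rule: pc_cases[of X b pc \<sigma> fl])
    case 1
    then show ?thesis using less.prems by simp
  next
    case (2 i)
    have IH: "\<And>pc' \<sigma>' fl'. pc < pc' \<Longrightarrow> Deadlock \<notin> set (run X b pc' \<sigma>' fl') \<Longrightarrow> ext \<sigma>' \<tau> \<Longrightarrow>
       fl' \<or> (\<exists>j. reach X b \<tau> pc' j \<and> isout X j) \<Longrightarrow> Ok True \<in> set (run X b pc' \<sigma>' fl')"
      using less.hyps 2 by (metis Suc_leI diff_less_mono2 le_imp_less_Suc)
    have cond: "fl \<or> isout X pc \<or> (\<exists>s j. dstep X b \<tau> pc = Some s \<and> reach X b \<tau> s j \<and> isout X j)"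
      using less.prems(3) reach_first by metis
    have io: "isout X pc = (basic_of (X ! i) = Some OutSetT)" using 2 isout_pc by simp
    show ?thesis
    proof (cases rule: prim_cases[of "X ! i"])
      case 1
      then show ?thesis using less.prems(3) cond io 2 run_Term[of i X b \<sigma> fl] dstep_Term[of X i b \<tau>] by auto
    next
      case (2 l)
      note u = this
      show ?thesis
      proof (cases "l = 0")
        case True
        then show ?thesis using less.prems(1) run_FJmp[OF _ u] \<open>pc = Suc i\<close> \<open>i < length X\<close> by simp
      next
        case False
        have r: "run X b pc \<sigma> fl = run X b (pc + l) \<sigma> fl"
          using run_FJmp[OF _ u] False \<open>pc = Suc i\<close> \<open>i < length X\<close> by simp
        have d: "dstep X b \<tau> pc = Some (pc + l)"
          using dstep_FJmp[OF _ u] False \<open>pc = Suc i\<close> \<open>i < length X\<close> by simp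
        show ?thesis unfolding r
          using IH[of "pc + l" \<sigma> fl] False less.prems(1,2) cond io u d r by auto
      qed
    next
      case (3 a)
      note ba = this
      have lt: "pc < next_pc (X ! i) pc v" for v by (rule next_pc_gt)
      show ?thesis
      proof (cases "\<exists>p. a = Split p")
        case True
        then obtain p where p: "a = Split p" by blast
        have r: "run X b pc \<sigma> fl = (case \<sigma> p of Some _ \<Rightarrow> [Deadlock]
            | None \<Rightarrow> run X b (next_pc (X ! i) pc True) (\<sigma>(p \<mapsto> True)) fl @
                      run X b (next_pc (X ! i) pc False) (\<sigma>(p \<mapsto> False)) fl)"
          using run_basic[OF \<open>i < length X\<close> HOL.refl ba, of b \<sigma> fl] p \<open>pc = Suc i\<close>
          by (simp split: option.split)
        have d: "dstep X b \<tau> pc = Some (next_pc (X ! i) pc (\<tau> p))"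
          using dstep_basic[OF \<open>i < length X\<close> HOL.refl ba, of b \<tau>] p \<open>pc = Suc i\<close> by simp
        show ?thesis
        proof (cases "\<sigma> p")
          case None
          let ?v = "\<tau> p"
          have nd: "Deadlock \<notin> set (run X b (next_pc (X ! i) pc ?v) (\<sigma>(p \<mapsto> ?v)) fl)"
            using less.prems(1) r None by (cases ?v) auto
          have e: "ext (\<sigma>(p \<mapsto> ?v)) \<tau>" using less.prems(2) by (auto simp: ext_def)
          have c: "fl \<or> (\<exists>j. reach X b \<tau> (next_pc (X ! i) pc ?v) j \<and> isout X j)"
            using cond io ba p d by auto
          have "Ok True \<in> set (run X b (next_pc (X ! i) pc ?v) (\<sigma>(p \<mapsto> ?v)) fl)"
            by (rule IH[OF lt nd e c])
          then show ?thesis using r None by (cases ?v) auto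
        next
          case (Some x)
          then show ?thesis using less.prems(1) r by simp
        qed
      next
        case False
        have r: "run X b pc \<sigma> fl = (case basic_reply b \<sigma> a of None \<Rightarrow> [Deadlock]
            | Some r \<Rightarrow> run X b (next_pc (X ! i) pc r) \<sigma> (fl \<or> a = OutSetT))"
          using run_basic[OF \<open>i < length X\<close> HOL.refl ba, of b \<sigma> fl] False \<open>pc = Suc i\<close>
          by (cases a) (auto split: option.split)
        show ?thesis
        proof (cases "basic_reply b \<sigma> a")
          case None
          then show ?thesis using less.prems(1) r by simp
        next
          case (Some v)
          have d: "dstep X b \<tau> pc = Some (next_pc (X ! i) pc v)"
            using dstep_basic[OF \<open>i < length X\<close> HOL.refl ba, of b \<tau>] dreply_ext[OF less.prems(2) Some] \<open>pc = Suc i\<close>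
            by simp
          have nd: "Deadlock \<notin> set (run X b (next_pc (X ! i) pc v) \<sigma> (fl \<or> a = OutSetT))"
            using less.prems(1) r Some by simp
          have c: "(fl \<or> a = OutSetT) \<or> (\<exists>j. reach X b \<tau> (next_pc (X ! i) pc v) j \<and> isout X j)"
            using cond io ba d by auto
          have "Ok True \<in> set (run X b (next_pc (X ! i) pc v) \<sigma> (fl \<or> a = OutSetT))"
            by (rule IH[OF lt nd less.prems(2) c])
          then show ?thesis using r Some by simp
        qed
      qed
    qed
  qed
qed

lemma run_sound:
  "Ok True \<in> set (run X b pc \<sigma> fl) \<Longrightarrow> \<exists>\<tau>. ext \<sigma> \<tau> \<and> (fl \<or> (\<exists>j. reach X b \<tau> pc j \<and> isout X j))"
proof (induction "Suc (length X) - pc" arbitrary: pc \<sigma> fl rule: less_induct)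
  case less
  show ?case
  proof (cases rule: pc_cases[of X b pc \<sigma> fl])
    case 1
    then show ?thesis using less.prems by simp
  next
    case (2 i)
    have IH: "\<And>pc' \<sigma>' fl'. pc < pc' \<Longrightarrow> Ok True \<in> set (run X b pc' \<sigma>' fl') \<Longrightarrow>
       \<exists>\<tau>. ext \<sigma>' \<tau> \<and> (fl' \<or> (\<exists>j. reach X b \<tau> pc' j \<and> isout X j))"
      using less.hyps 2 by (metis Suc_leI diff_less_mono2 le_imp_less_Suc)
    have io: "isout X pc = (basic_of (X ! i) = Some OutSetT)" using 2 isout_pc by simp
    show ?thesis
    proof (cases rule: prim_cases[of "X ! i"])
      case 1
      then have "fl" using less.prems 2 run_Term[of i X b \<sigma> fl] by simp
      then show ?thesis using ext_tau0 by blast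
    next
      case (2 l)
      note u = this
      have l0: "l \<noteq> 0" using less.prems run_FJmp[OF _ u] \<open>pc = Suc i\<close> \<open>i < length X\<close>
        by (cases "l = 0") auto
      have r: "run X b pc \<sigma> fl = run X b (pc + l) \<sigma> fl"
        using run_FJmp[OF _ u] l0 \<open>pc = Suc i\<close> \<open>i < length X\<close> by simp
      have d: "dstep X b \<tau> pc = Some (pc + l)" for \<tau>
        using dstep_FJmp[OF _ u] l0 \<open>pc = Suc i\<close> \<open>i < length X\<close> by simp
      obtain \<tau> where "ext \<sigma> \<tau>" "fl \<or> (\<exists>j. reach X b \<tau> (pc + l) j \<and> isout X j)"
        using IH[of "pc + l" \<sigma> fl] l0 less.prems r by auto
      then show ?thesis using d reach_prepend by blast
    next
      case (3 a)
      note ba = this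
      have lt: "pc < next_pc (X ! i) pc v" for v by (rule next_pc_gt)
      show ?thesis
      proof (cases "\<exists>p. a = Split p")
        case True
        then obtain p where p: "a = Split p" by blast
        have r: "run X b pc \<sigma> fl = (case \<sigma> p of Some _ \<Rightarrow> [Deadlock]
            | None \<Rightarrow> run X b (next_pc (X ! i) pc True) (\<sigma>(p \<mapsto> True)) fl @
                      run X b (next_pc (X ! i) pc False) (\<sigma>(p \<mapsto> False)) fl)"
          using run_basic[OF \<open>i < length X\<close> HOL.refl ba, of b \<sigma> fl] p \<open>pc = Suc i\<close>
          by (simp split: option.split)
        have d: "dstep X b \<tau> pc = Some (next_pc (X ! i) pc (\<tau> p))" for \<tau>
          using dstep_basic[OF \<open>i < length X\<close> HOL.refl ba, of b \<tau>] p \<open>pc = Suc i\<close> by simp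
        have None: "\<sigma> p = None" using less.prems r by (cases "\<sigma> p") auto
        then obtain v where v: "Ok True \<in> set (run X b (next_pc (X ! i) pc v) (\<sigma>(p \<mapsto> v)) fl)"
          using less.prems r by auto
        obtain \<tau> where t: "ext (\<sigma>(p \<mapsto> v)) \<tau>" "fl \<or> (\<exists>j. reach X b \<tau> (next_pc (X ! i) pc v) j \<and> isout X j)"
          using IH[OF lt v] by blast
        have tp: "\<tau> p = v" "ext \<sigma> \<tau>" using t(1) None unfolding ext_def
          by (metis fun_upd_same, metis fun_upd_other option.distinct(1))
        then show ?thesis using t(2) d[of \<tau>] reach_prepend by auto
      next
        case False
        have r: "run X b pc \<sigma> fl = (case basic_reply b \<sigma> a of None \<Rightarrow> [Deadlock]
            | Some r \<Rightarrow> run X b (next_pc (X ! i) pc r) \<sigma> (fl \<or> a = OutSetT))"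
          using run_basic[OF \<open>i < length X\<close> HOL.refl ba, of b \<sigma> fl] False \<open>pc = Suc i\<close>
          by (cases a) (auto split: option.split)
        obtain v where Some: "basic_reply b \<sigma> a = Some v"
          using less.prems r by (cases "basic_reply b \<sigma> a") auto
        have v: "Ok True \<in> set (run X b (next_pc (X ! i) pc v) \<sigma> (fl \<or> a = OutSetT))"
          using less.prems r Some by simp
        obtain \<tau> where t: "ext \<sigma> \<tau>" "(fl \<or> a = OutSetT) \<or> (\<exists>j. reach X b \<tau> (next_pc (X ! i) pc v) j \<and> isout X j)"
          using IH[OF lt v] by blast
        have d: "dstep X b \<tau> pc = Some (next_pc (X ! i) pc v)"
          using dstep_basic[OF \<open>i < length X\<close> HOL.refl ba, of b \<tau>] dreply_ext[OF t(1) Some] \<open>pc = Suc i\<close>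
          by simp
        show ?thesis using t d reach_prepend io ba reach.refl by metis
      qed
    qed
  qed
qed


datatype form = FV nat | FC bool | FN form | FA form form | FO form form

fun feval :: "bool list \<Rightarrow> form \<Rightarrow> bool" where
  "feval x (FV i) = wire x i"
| "feval x (FC c) = c"
| "feval x (FN f) = (\<not> feval x f)"
| "feval x (FA f g) = (feval x f \<and> feval x g)"
| "feval x (FO f g) = (feval x f \<or> feval x g)"

fun fsize :: "form \<Rightarrow> nat" where
  "fsize (FV i) = 1"
| "fsize (FC c) = 1"
| "fsize (FN f) = fsize f + 1"
| "fsize (FA f g) = fsize f + fsize g + 1"
| "fsize (FO f g) = fsize f + fsize g + 1"

fun fcompile :: "nat \<Rightarrow> form \<Rightarrow> gate list" where
  "fcompile o1 (FV i) = [GIn i]"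
| "fcompile o1 (FC c) = [GConst c]"
| "fcompile o1 (FN f) = fcompile o1 f @ [GNot (o1 + fsize f - 1)]"
| "fcompile o1 (FA f g) = fcompile o1 f @ fcompile (o1 + fsize f) g @ [GAnd (o1 + fsize f - 1) (o1 + fsize f + fsize g - 1)]"
| "fcompile o1 (FO f g) = fcompile o1 f @ fcompile (o1 + fsize f) g @ [GOr (o1 + fsize f - 1) (o1 + fsize f + fsize g - 1)]"

lemma fsize_pos: "fsize f \<ge> 1"
  by (induction f) auto

lemma length_comp: "length (fcompile o1 f) = fsize f"
  by (induction o1 f rule: fcompile.induct) auto

lemma wire_last: "ws \<noteq> [] \<Longrightarrow> wire (vs @ ws @ zs) (length vs + length ws - 1) = last ws"
proof -
  assume ne: "ws \<noteq> []"
  then have e: "length vs + length ws - 1 = length vs + (length ws - 1)" by (cases ws) auto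
  have "(vs @ ws @ zs) ! (length vs + (length ws - 1)) = ws ! (length ws - 1)"
    using ne by (simp add: nth_append_length_plus nth_append)
  moreover have "length ws - 1 < length ws + length zs" using ne by (cases ws) auto
  ultimately show ?thesis using ne unfolding e by (simp add: wire_def last_conv_nth)
qed

lemma comp_correct: "length vs = o1 \<Longrightarrow>
  \<exists>ws. eval_gates x (fcompile o1 f) vs = vs @ ws \<and> length ws = fsize f \<and> ws \<noteq> [] \<and> last ws = feval x f"
proof (induction o1 f arbitrary: vs rule: fcompile.induct)
  case (1 o1 i)
  then show ?case by (simp add: wire_def)
next
  case (2 o1 c)
  then show ?case by simp
next
  case (3 o1 f)
  obtain ws where ws: "eval_gates x (fcompile o1 f) vs = vs @ ws" "length ws = fsize f" "ws \<noteq> []" "last ws = feval x f"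
    using "3.IH"[OF "3.prems"] by blast
  have "wire (vs @ ws) (o1 + fsize f - 1) = feval x f"
    using wire_last[OF ws(3), of vs "[]"] ws "3.prems" by simp
  then show ?case using ws by (auto simp: eval_gates_append)
next
  case (4 o1 f g)
  obtain ws where ws: "eval_gates x (fcompile o1 f) vs = vs @ ws" "length ws = fsize f" "ws \<noteq> []" "last ws = feval x f"
    using "4.IH"(1)[OF "4.prems"] by blast
  obtain us where us: "eval_gates x (fcompile (o1 + fsize f) g) (vs @ ws) = (vs @ ws) @ us" "length us = fsize g" "us \<noteq> []" "last us = feval x g"
    using "4.IH"(2)[of "vs @ ws"] "4.prems" ws by auto
  have a: "wire (vs @ ws @ us) (o1 + fsize f - 1) = feval x f"
    using wire_last[OF ws(3), of vs us] ws "4.prems" by simp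
  have b: "wire (vs @ ws @ us) (o1 + fsize f + fsize g - 1) = feval x g"
    using wire_last[OF us(3), of "vs @ ws" "[]"] ws us "4.prems" by simp
  show ?case using ws us a b by (auto simp: eval_gates_append)
next
  case (5 o1 f g)
  obtain ws where ws: "eval_gates x (fcompile o1 f) vs = vs @ ws" "length ws = fsize f" "ws \<noteq> []" "last ws = feval x f"
    using "5.IH"(1)[OF "5.prems"] by blast
  obtain us where us: "eval_gates x (fcompile (o1 + fsize f) g) (vs @ ws) = (vs @ ws) @ us" "length us = fsize g" "us \<noteq> []" "last us = feval x g"
    using "5.IH"(2)[of "vs @ ws"] "5.prems" ws by auto
  have a: "wire (vs @ ws @ us) (o1 + fsize f - 1) = feval x f"
    using wire_last[OF ws(3), of vs us] ws "5.prems" by simp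
  have b: "wire (vs @ ws @ us) (o1 + fsize f + fsize g - 1) = feval x g"
    using wire_last[OF us(3), of "vs @ ws" "[]"] ws us "5.prems" by simp
  show ?case using ws us a b by (auto simp: eval_gates_append)
qed

lemma circ_comp: "circ_eval (fcompile 0 f) x = feval x f"
  using comp_correct[of "[]" 0 x f] by (auto simp: circ_eval_def)

fun Ors :: "form list \<Rightarrow> form" where
  "Ors [] = FC False" | "Ors (f # fs) = FO f (Ors fs)"
fun Ands :: "form list \<Rightarrow> form" where
  "Ands [] = FC True" | "Ands (f # fs) = FA f (Ands fs)"

lemma feval_Ors[simp]: "feval x (Ors fs) = (\<exists>f\<in>set fs. feval x f)"
  by (induction fs) auto
lemma feval_Ands[simp]: "feval x (Ands fs) = (\<forall>f\<in>set fs. feval x f)"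
  by (induction fs) auto

lemma fsize_Ors: "(\<forall>f\<in>set fs. fsize f \<le> B) \<Longrightarrow> fsize (Ors fs) \<le> (B + 1) * length fs + 1"
  by (induction fs) auto
lemma fsize_Ands: "(\<forall>f\<in>set fs. fsize f \<le> B) \<Longrightarrow> fsize (Ands fs) \<le> (B + 1) * length fs + 1"
  by (induction fs) auto


fun parof :: "prim \<Rightarrow> nat list" where
  "parof u = (case basic_of u of Some (Split p) \<Rightarrow> [p] | Some (Reply p) \<Rightarrow> [p] | _ \<Rightarrow> [])"

definition pars :: "prim list \<Rightarrow> nat list" where
  "pars X = concat (map parof X)"

fun pidx :: "nat list \<Rightarrow> nat \<Rightarrow> nat" where
  "pidx [] p = 0"
| "pidx (q # qs) p = (if q = p then 0 else Suc (pidx qs p))"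

lemma pidx: "p \<in> set ps \<Longrightarrow> pidx ps p < length ps \<and> ps ! pidx ps p = p"
  by (induction ps) auto

lemma length_pars: "length (pars X) \<le> length X"
proof -
  have "length (parof u) \<le> 1" for u by (auto split: option.split basic.split)
  then show ?thesis unfolding pars_def length_concat
    using sum_list_bound[of "map parof X" length 1] by (simp add: comp_def)
qed

definition tx :: "nat \<Rightarrow> prim list \<Rightarrow> bool list \<Rightarrow> nat \<Rightarrow> bool" where
  "tx n X x p = wire x (n + pidx (pars X) p)"

fun rlit :: "nat \<Rightarrow> prim list \<Rightarrow> basic \<Rightarrow> form option" where
  "rlit n X (InGet j) = (if 1 \<le> j \<and> j \<le> n then Some (FV (j - 1)) else None)"
| "rlit n X OutSetT = Some (FC True)"
| "rlit n X (Split p) = Some (FV (n + pidx (pars X) p))"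
| "rlit n X (Reply p) = Some (FV (n + pidx (pars X) p))"

definition E :: "nat \<Rightarrow> prim list \<Rightarrow> nat \<Rightarrow> nat \<Rightarrow> form" where
  "E n X i j = (if i = 0 \<or> length X < i then FC False else
     (case X ! (i - 1) of Term \<Rightarrow> FC False
      | FJmp l \<Rightarrow> FC (l \<noteq> 0 \<and> i + l = j)
      | u \<Rightarrow> (case rlit n X (the (basic_of u)) of None \<Rightarrow> FC False
             | Some L \<Rightarrow> FO (FA L (FC (next_pc u i True = j))) (FA (FN L) (FC (next_pc u i False = j))))))"

lemma rlit_sem: "length w = n \<Longrightarrow>
  (case rlit n X a of None \<Rightarrow> None | Some L \<Rightarrow> Some (feval (w @ c) L)) = dreply w (tx n X (w @ c)) a"
  by (cases a) (auto simp: tx_def wire_def nth_append)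

lemma E_sem: "length w = n \<Longrightarrow> feval (w @ c) (E n X i j) = (dstep X w (tx n X (w @ c)) i = Some j)"
proof -
  assume w: "length w = n"
  show ?thesis
  proof (cases "i = 0 \<or> length X < i")
    case True
    then show ?thesis by (auto simp: E_def dstep_def)
  next
    case False
    then obtain i' where i': "i = Suc i'" "i' < length X" by (cases i) auto
    show ?thesis
    proof (cases rule: prim_cases[of "X ! i'"])
      case 1
      then show ?thesis using i' by (simp add: E_def dstep_def)
    next
      case (2 l)
      then show ?thesis using i' by (auto simp: E_def dstep_def)
    next
      case (3 a)
      have r: "(case rlit n X a of None \<Rightarrow> None | Some L \<Rightarrow> Some (feval (w @ c) L)) = dreply w (tx n X (w @ c)) a"
        by (rule rlit_sem[OF w])
      have e: "E n X i j = (case rlit n X a of None \<Rightarrow> FC False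
             | Some L \<Rightarrow> FO (FA L (FC (next_pc (X ! i') i True = j))) (FA (FN L) (FC (next_pc (X ! i') i False = j))))"
        using i' 3 by (cases "X ! i'") (auto simp: E_def split: option.split)
      have d: "dstep X w (tx n X (w @ c)) i = (case dreply w (tx n X (w @ c)) a of None \<Rightarrow> None
          | Some r \<Rightarrow> Some (next_pc (X ! i') i r))"
        using i' 3 by (cases "X ! i'") (auto simp: dstep_def split: option.split)
      show ?thesis
      proof (cases "rlit n X a")
        case (Some L)
        then show ?thesis unfolding e d r[symmetric] by (cases "feval (w @ c) L") auto
      qed (unfold e d r[symmetric], simp)
    qed
  qed
qed


definition V :: "nat \<Rightarrow> prim list \<Rightarrow> nat \<Rightarrow> form" where
  "V n X j = FV (n + length (pars X) + (j - 1))"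

definition Fm :: "nat \<Rightarrow> prim list \<Rightarrow> form" where
  "Fm n X = FA (Ands (map (\<lambda>j. FO (FN (V n X j)) (FO (FC (j = 1))
        (Ors (map (\<lambda>i. FA (V n X i) (E n X i j)) [1..<j])))) [1..<Suc (length X)]))
     (Ors (map (\<lambda>i. FA (V n X i) (FC (isout X i))) [1..<Suc (length X)]))"

lemma Fm_sem: "length w = n \<Longrightarrow> feval (w @ c) (Fm n X) \<longleftrightarrow>
  (\<forall>j\<in>set [1..<Suc (length X)]. feval (w @ c) (V n X j) \<longrightarrow> j = 1 \<or>
      (\<exists>i\<in>set [1..<j]. feval (w @ c) (V n X i) \<and> dstep X w (tx n X (w @ c)) i = Some j)) \<and>
  (\<exists>i\<in>set [1..<Suc (length X)]. feval (w @ c) (V n X i) \<and> isout X i)"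
  by (simp add: Fm_def E_sem del: upt_Suc)

lemma dstep_lt: "dstep X b \<tau> i = Some j \<Longrightarrow> 1 \<le> i \<and> i \<le> length X \<and> i < j"
  unfolding dstep_def
  by (auto simp: next_pc_gt split: if_splits prim.splits option.splits)

lemma dstep_cong: "(\<forall>p\<in>set (pars X). \<tau> p = \<tau>' p) \<Longrightarrow> dstep X b \<tau> i = dstep X b \<tau>' i"
proof (cases "i = 0 \<or> length X < i")
  case True
  then show ?thesis by (simp add: dstep_def)
next
  case False
  assume h: "\<forall>p\<in>set (pars X). \<tau> p = \<tau>' p"
  have mem: "X ! (i - 1) \<in> set X" using False by auto
  have sub: "set (parof (X ! (i - 1))) \<subseteq> set (pars X)" using mem by (auto simp: pars_def)
  have "dreply b \<tau> a = dreply b \<tau>' a" if "basic_of (X ! (i - 1)) = Some a" for a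
    using that sub h by (cases a) auto
  then show ?thesis unfolding dstep_def
    by (cases "X ! (i - 1)") (auto split: option.split)
qed

lemma reach_mono: "reach X b \<tau> i j \<Longrightarrow> (\<And>k. dstep X b \<tau> k = dstep X b \<tau>' k) \<Longrightarrow> reach X b \<tau>' i j"
  by (induction rule: reach.induct) (auto intro: reach.intros)

lemma reach_last: "reach X b \<tau> i j \<Longrightarrow> j = i \<or> (\<exists>k. reach X b \<tau> i k \<and> dstep X b \<tau> k = Some j)"
  by (induction rule: reach.induct) auto

lemma chain_reach:
  assumes "\<forall>j\<in>set [1..<Suc K]. v j \<longrightarrow> j = 1 \<or> (\<exists>i\<in>set [1..<j]. v i \<and> dstep X b \<tau> i = Some j)"
  shows "1 \<le> j \<Longrightarrow> j \<le> K \<Longrightarrow> v j \<Longrightarrow> reach X b \<tau> 1 j"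
proof (induction j rule: less_induct)
  case (less j)
  show ?case
  proof (cases "j = 1")
    case True
    then show ?thesis by (simp add: reach.refl)
  next
    case False
    have "j \<in> set [1..<Suc K]" using less.prems by (auto simp del: upt_Suc)
    then obtain i where i: "i \<in> set [1..<j]" "v i" "dstep X b \<tau> i = Some j"
      using assms less.prems False by blast
    then have "reach X b \<tau> 1 i" using less.IH[of i] less.prems by auto
    then show ?thesis using i reach.step by blast
  qed
qed

lemma Fm_sound: "length w = n \<Longrightarrow> feval (w @ c) (Fm n X) \<Longrightarrow>
   \<exists>i. reach X w (tx n X (w @ c)) 1 i \<and> isout X i"
proof -
  assume w: "length w = n" and f: "feval (w @ c) (Fm n X)"
  note F = f[unfolded Fm_sem[OF w]]
  obtain i where i: "i \<in> set [1..<Suc (length X)]" "feval (w @ c) (V n X i)" "isout X i"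
    using F by blast
  have A: "\<forall>j\<in>set [1..<Suc (length X)]. feval (w @ c) (V n X j) \<longrightarrow> j = 1 \<or>
      (\<exists>i\<in>set [1..<j]. feval (w @ c) (V n X i) \<and> dstep X w (tx n X (w @ c)) i = Some j)"
    using F by blast
  have "1 \<le> i" "i \<le> length X" using i(1) by (auto simp del: upt_Suc)
  then have "reach X w (tx n X (w @ c)) 1 i"
    using chain_reach[OF A] i(2) by blast
  then show ?thesis using i by blast
qed

definition mkc :: "prim list \<Rightarrow> bool list \<Rightarrow> (nat \<Rightarrow> bool) \<Rightarrow> bool list" where
  "mkc X w \<tau> = map \<tau> (pars X) @ map (\<lambda>j. reach X w \<tau> 1 j) [1..<Suc (length X)]"

lemma length_mkc: "length (mkc X w \<tau>) = length (pars X) + length X"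
  by (simp add: mkc_def del: upt_Suc)

lemma Fm_complete:
  assumes w: "length w = n" and r: "reach X w \<tau> 1 i0" "isout X i0"
  shows "feval (w @ mkc X w \<tau>) (Fm n X)"
proof -
  let ?c = "mkc X w \<tau>"
  let ?P = "length (pars X)"
  have tx: "\<forall>p\<in>set (pars X). tx n X (w @ ?c) p = \<tau> p"
  proof
    fix p assume p: "p \<in> set (pars X)"
    have "(w @ ?c) ! (n + pidx (pars X) p) = ?c ! pidx (pars X) p" using w by (simp add: nth_append)
    also have "\<dots> = \<tau> p" using pidx[OF p] by (simp add: mkc_def nth_append)
    finally show "tx n X (w @ ?c) p = \<tau> p"
      using pidx[OF p] w by (simp add: tx_def wire_def length_mkc)
  qed
  have ds: "dstep X w (tx n X (w @ ?c)) k = dstep X w \<tau> k" for k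
    by (rule dstep_cong[OF tx])
  have V: "feval (w @ ?c) (V n X j) = reach X w \<tau> 1 j" if "1 \<le> j" "j \<le> length X" for j
  proof -
    have "(w @ ?c) ! (n + ?P + (j - 1)) = ?c ! (?P + (j - 1))" using w
      by (metis add.assoc nth_append_length_plus)
    also have "\<dots> = (map (\<lambda>j. reach X w \<tau> 1 j) [1..<Suc (length X)]) ! (j - 1)"
      unfolding mkc_def using nth_append_length_plus[of "map \<tau> (pars X)"] by simp
    also have "\<dots> = reach X w \<tau> 1 j" using that by (simp del: upt_Suc)
    finally have e: "(w @ ?c) ! (n + ?P + (j - 1)) = reach X w \<tau> 1 j" .
    have idx: "n + ?P + (j - 1) < length (w @ ?c)" using that w by (simp add: length_mkc)
    show ?thesis unfolding V_def feval.simps wire_def using idx e by blast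
  qed
  show ?thesis unfolding Fm_sem[OF w]
  proof (intro conjI ballI impI)
    fix j assume j: "j \<in> set [1..<Suc (length X)]" "feval (w @ ?c) (V n X j)"
    then have rj: "reach X w \<tau> 1 j" using V by auto
    show "j = 1 \<or> (\<exists>i\<in>set [1..<j]. feval (w @ ?c) (V n X i) \<and> dstep X w (tx n X (w @ ?c)) i = Some j)"
    proof (cases "j = 1")
      case False
      then obtain k where k: "reach X w \<tau> 1 k" "dstep X w \<tau> k = Some j" using reach_last[OF rj] by blast
      then have "1 \<le> k" "k \<le> length X" "k < j" using dstep_lt by blast+
      then have "k \<in> set [1..<j]" "feval (w @ ?c) (V n X k)" using k V by auto
      moreover have "dstep X w (tx n X (w @ ?c)) k = Some j" using k(2) ds[of k] by simp
      ultimately show ?thesis by blast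
    qed simp
  next
    have "1 \<le> i0" "i0 \<le> length X" using r(2) by (auto simp: isout_def)
    then have "i0 \<in> set [1..<Suc (length X)]" "feval (w @ ?c) (V n X i0)" using V r
      by (auto simp del: upt_Suc)
    then show "\<exists>i\<in>set [1..<Suc (length X)]. feval (w @ ?c) (V n X i) \<and> isout X i" using r(2) by blast
  qed
qed


lemma rlit_size: "rlit n X a = Some L \<Longrightarrow> fsize L = 1"
  by (cases a) (auto split: if_splits)

lemma E_size: "fsize (E n X i j) \<le> 8"
  unfolding E_def
  by (auto split: prim.split option.split dest: rlit_size)

lemma fsize_Fm: "fsize (Fm n X) \<le> 25 * (length X + 1) ^ 2"
proof -
  let ?K = "length X"
  have inner: "fsize (Ors (map (\<lambda>i. FA (V n X i) (E n X i j)) [1..<j])) \<le> 11 * ?K + 1"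
    if "j \<in> set [1..<Suc ?K]" for j
  proof -
    have "fsize (Ors (map (\<lambda>i. FA (V n X i) (E n X i j)) [1..<j])) \<le> (10 + 1) * length (map (\<lambda>i. FA (V n X i) (E n X i j)) [1..<j]) + 1"
      by (rule fsize_Ors) (auto simp: V_def E_size simp del: upt_Suc)
    also have "\<dots> \<le> 11 * ?K + 1" using that by (auto simp del: upt_Suc)
    finally show ?thesis .
  qed
  have A: "fsize (Ands (map (\<lambda>j. FO (FN (V n X j)) (FO (FC (j = 1))
        (Ors (map (\<lambda>i. FA (V n X i) (E n X i j)) [1..<j])))) [1..<Suc ?K])) \<le> (11 * ?K + 7) * ?K + 1"
  proof -
    have "fsize (Ands (map (\<lambda>j. FO (FN (V n X j)) (FO (FC (j = 1))
        (Ors (map (\<lambda>i. FA (V n X i) (E n X i j)) [1..<j])))) [1..<Suc ?K])) \<le>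
        (11 * ?K + 6 + 1) * length [1..<Suc ?K] + 1"
      using fsize_Ands[of "map (\<lambda>j. FO (FN (V n X j)) (FO (FC (j = 1))
        (Ors (map (\<lambda>i. FA (V n X i) (E n X i j)) [1..<j])))) [1..<Suc ?K]" "11 * ?K + 6"] inner
      by (auto simp: V_def simp del: upt_Suc)
    then show ?thesis by (simp add: algebra_simps del: upt_Suc)
  qed
  have B: "fsize (Ors (map (\<lambda>i. FA (V n X i) (FC (isout X i))) [1..<Suc ?K])) \<le> 4 * ?K + 1"
    using fsize_Ors[of "map (\<lambda>i. FA (V n X i) (FC (isout X i))) [1..<Suc ?K]" 3]
    by (auto simp: V_def simp del: upt_Suc)
  have "fsize (Fm n X) \<le> (11 * ?K + 7) * ?K + 1 + (4 * ?K + 1) + 1"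
    unfolding Fm_def using A B by simp
  also have "\<dots> \<le> 25 * (?K + 1) ^ 2" by (simp add: power2_eq_square algebra_simps)
  finally show ?thesis .
qed

lemma less_2pow: "m < (2::nat) ^ m"
proof (induction m)
  case (Suc m)
  have "1 \<le> (2::nat) ^ m" by simp
  moreover have "(2::nat) ^ Suc m = 2 * 2 ^ m" by simp
  ultimately show ?case using Suc.IH by linarith
qed simp

lemma cert_bound: assumes "2 \<le> n" shows "2 * (a * n ^ e + a) \<le> n ^ (e + 4 * a + 2)"
proof -
  have "1 \<le> n ^ e" using assms by simp
  then have "2 * (a * n ^ e + a) \<le> 4 * a * n ^ e" by (simp add: algebra_simps)
  also have "\<dots> \<le> (4 * a + 2) * n ^ e" by simp
  also have "\<dots> \<le> 2 ^ (4 * a + 2) * n ^ e"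
    using less_2pow[of "4 * a + 2"] by (intro mult_le_mono1) linarith
  also have "\<dots> \<le> n ^ (4 * a + 2) * n ^ e" using assms by (intro mult_le_mono1 power_mono) auto
  also have "\<dots> = n ^ (e + 4 * a + 2)"
  proof -
    have eq: "e + 4 * a + 2 = (4 * a + 2) + e" by simp
    show ?thesis unfolding eq power_add ..
  qed
  finally show ?thesis .
qed


theorem p_sub: "f \<in> P_lsis \<Longrightarrow> lang_of f \<in> NPpoly"
proof -
  assume "f \<in> P_lsis"
  then obtain h where pbh: "poly_bounded h"
    and hX: "\<forall>n. \<exists>X\<in>SIS_br. length X \<le> h n \<and> splitting_computes X n (f n)"
    by (auto simp: P_lsis_def)
  obtain a e where he: "\<forall>N. h N \<le> a * N ^ e + a" using pbh by (auto simp: poly_bounded_def)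
  define Xn where "Xn n = (SOME X. X \<in> SIS_br \<and> length X \<le> h n \<and> splitting_computes X n (f n))" for n
  have Xn: "Xn n \<in> SIS_br \<and> length (Xn n) \<le> h n \<and> splitting_computes (Xn n) n (f n)" for n
    unfolding Xn_def using hX by (metis (mono_tags, lifting) someI_ex)
  define Phi where "Phi n = (if n = 0 then FC (f 0 []) else if n = 1 then
      FO (FA (FV 0) (FC (f 1 [True]))) (FA (FN (FV 0)) (FC (f 1 [False]))) else Fm n (Xn n))" for n
  define g where "g w c = feval (w @ c) (Phi (length w))" for w c
  define k where "k = e + 4 * a + 2"
  define h' where "h' N = 25 * (a * N ^ e + a + 1) ^ 2 + 8" for N
  have h'_mono: "h' N \<le> h' N'" if "N \<le> N'" for N N'
    unfolding h'_def using that by (intro add_le_mono1 mult_le_mono2 power_mono add_le_mono1 mult_le_mono2) auto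
  have size: "fsize (Phi n) \<le> h' n" for n
  proof (cases "n \<le> 1")
    case True
    then show ?thesis by (auto simp: Phi_def h'_def)
  next
    case False
    have "fsize (Phi n) \<le> 25 * (length (Xn n) + 1) ^ 2" using False fsize_Fm by (simp add: Phi_def)
    also have "\<dots> \<le> 25 * (a * n ^ e + a + 1) ^ 2"
      using Xn[of n] he by (intro mult_le_mono2 power_mono) (auto intro: le_trans)
    finally show ?thesis by (simp add: h'_def)
  qed
  have pb': "poly_bounded h'"
  proof -
    have "Q (\<lambda>N. a * N ^ e + a + 1)" by (rule Q_add[OF Q_add[OF Q_mult[OF Q_const Q_pow[OF Q_id]] Q_const] Q_const])
    then have "Q (\<lambda>N. 25 * (a * N ^ e + a + 1) ^ 2 + 8)" by (rule Q_add[OF Q_mult[OF Q_const Q_pow] Q_const])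
    then show ?thesis unfolding h'_def by (rule Q_pb)
  qed
  have Pg: "Ppoly2 g"
    unfolding Ppoly2_def
  proof (rule exI[of _ h'], intro conjI allI)
    show "poly_bounded h'" by (fact pb')
    fix n m
    show "\<exists>C. length C \<le> h' (n + m) \<and> (\<forall>w c. length w = n \<longrightarrow> length c = m \<longrightarrow> circ_eval C (w @ c) = g w c)"
    proof (intro exI conjI allI impI)
      show "length (fcompile 0 (Phi n)) \<le> h' (n + m)"
        using size[of n] h'_mono[of n "n + m"] by (simp add: length_comp)
      fix w c :: "bool list" assume "length w = n" "length c = m"
      then show "circ_eval (fcompile 0 (Phi n)) (w @ c) = g w c" by (simp add: circ_comp g_def)
    qed
  qed
  have mem: "w \<in> lang_of f \<longleftrightarrow> (\<exists>c. length c \<le> length w ^ k \<and> g w c)" for w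
  proof -
    define n where "n = length w"
    show ?thesis
    proof (cases "n \<le> 1")
      case True
      have gw: "g w c = f n w" for c
      proof (cases "n = 0")
        case True
        then show ?thesis by (simp add: g_def Phi_def n_def)
      next
        case False
        then have "n = 1" using \<open>n \<le> 1\<close> by simp
        then obtain x where x: "w = [x]" using n_def by (cases w) auto
        then show ?thesis using \<open>n = 1\<close> by (cases x) (auto simp: g_def Phi_def wire_def)
      qed
      show ?thesis
      proof
        assume "w \<in> lang_of f"
        then show "\<exists>c. length c \<le> length w ^ k \<and> g w c"
        proof (intro exI conjI)
          show "length ([]::bool list) \<le> length w ^ k" by simp
          show "g w []" using gw[of "[]"] \<open>w \<in> lang_of f\<close> by (simp add: lang_of_def n_def)
        qed
      next
        assume "\<exists>c. length c \<le> length w ^ k \<and> g w c"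
        then show "w \<in> lang_of f" using gw by (auto simp: lang_of_def n_def)
      qed
    next
      case False
      let ?X = "Xn n"
      have sc: "Deadlock \<notin> set (run ?X w 1 Map.empty False)"
        "f n w \<longleftrightarrow> Ok True \<in> set (run ?X w 1 Map.empty False)"
        using Xn[of n] unfolding splitting_computes_def Let_def by (auto simp: n_def)
      have Ph: "Phi n = Fm n ?X" using False by (simp add: Phi_def)
      have ext0: "ext Map.empty \<tau>" for \<tau> by (simp add: ext_def)
      show ?thesis
      proof
        assume "w \<in> lang_of f"
        then have "Ok True \<in> set (run ?X w 1 Map.empty False)" using sc by (simp add: lang_of_def n_def)
        then obtain \<tau> j where j: "reach ?X w \<tau> 1 j" "isout ?X j" using run_sound by blast
        let ?c = "mkc ?X w \<tau>"
        have "g w ?c" using Fm_complete[OF n_def[symmetric] j] Ph by (simp add: g_def n_def)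
        moreover have "length ?c \<le> length w ^ k"
        proof -
          have "length ?c \<le> 2 * length ?X" using length_pars[of ?X] by (simp add: length_mkc)
          also have "\<dots> \<le> 2 * (a * n ^ e + a)" using Xn[of n] he by (meson le_trans mult_le_mono2)
          also have "\<dots> \<le> n ^ k" unfolding k_def using False by (intro cert_bound) simp
          finally show ?thesis by (simp add: n_def)
        qed
        ultimately show "\<exists>c. length c \<le> length w ^ k \<and> g w c" by blast
      next
        assume "\<exists>c. length c \<le> length w ^ k \<and> g w c"
        then obtain c where "g w c" by blast
        then have "feval (w @ c) (Fm n ?X)" using Ph by (simp add: g_def n_def)
        then obtain i where "reach ?X w (tx n ?X (w @ c)) 1 i" "isout ?X i"
          using Fm_sound[OF n_def[symmetric]] by blast
        then have "Ok True \<in> set (run ?X w 1 Map.empty False)"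
          using run_complete[OF sc(1) ext0] by blast
        then show "w \<in> lang_of f" using sc by (simp add: lang_of_def n_def)
      qed
    qed
  qed
  show ?thesis unfolding NPpoly_def using Pg mem by blast
qed

theorem theorem12:
  shows "lang_of ` P_lsis = NPpoly"
  using p_sub np_sub by blast


end
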